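(* In the network revenue management problem described in the context, the Frequent Re-solving policy satisfies $v^{\mathrm{DLP}}-v^{\mathrm{FR}}=O(\sqrt{T})$: there exist constants $M$ and $T_1$ depending only on $\lambda_1,\dots,\lambda_n$, $r_1,\dots,r_n$ and $A$ (not on the capacities $C_1,\dots,C_m$) such that $v^{\mathrm{DLP}}-v^{\mathrm{FR}}\le M\sqrt{T}$ for all $T\ge T_1$.
   Context: NRM problem: horizon $[0,T]$, $T$ a positive integer; $n$ classes with independent Poisson arrivals $\Lambda_j(t)$ of rates $\lambda_j>0$; $m$ resources with initial capacities $C=(C_1,\dots,C_m)^\top$; accepting a class-$j$ customer earns $r_j\ge0$ and consumes $A_j=(a_{1j},\dots,a_{mj})^\top$, $a_{lj}\ge0$, $A=(a_{lj})$. Customers are irrevocably accepted or rejected upon arrival and can only be accepted if $A_j$ is componentwise at most the remaining capacity. Deterministic LP value: $v^{\mathrm{DLP}}=\max\{T\sum_jr_jx_j:\sum_jA_jx_j\le C/T,\ 0\le x_j\le\lambda_j\}$. Frequent Re-solving (FR) policy: for each $t=0,1,\dots,T-1$, with remaining capacity $C(t)$ and $b(t)=C(t)/(T-t)$, compute an optimal solution $x(t)$ of $\max\{\sum_jr_jx_j:\sum_jA_jx_j\le b(t),\ 0\le x_j\le\lambda_j\}$; during $[t,t+1)$ each arriving class-$j$ customer is accepted independently with probability $x_j(t)/\lambda_j$ if capacity suffices, and rejected otherwise. $v^{\mathrm{FR}}$ is its expected revenue. *)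

theory Defs
  imports "HOL-Probability.Probability"
begin

(* Classes are indexed by a finite type 'n, resources by a finite type 'm.
   lam j = arrival rate, r j = revenue, A l j = a_{lj}, capacities c :: 'm => real. *)

definition lp_feasible ::
  "('n::finite \<Rightarrow> real) \<Rightarrow> ('m::finite \<Rightarrow> 'n \<Rightarrow> real) \<Rightarrow> ('m \<Rightarrow> real) \<Rightarrow> ('n \<Rightarrow> real) \<Rightarrow> bool" where
  "lp_feasible lam A b x \<longleftrightarrow>
     (\<forall>l. (\<Sum>j\<in>UNIV. A l j * x j) \<le> b l) \<and> (\<forall>j. 0 \<le> x j \<and> x j \<le> lam j)"

definition lp_value ::
  "('n::finite \<Rightarrow> real) \<Rightarrow> ('n \<Rightarrow> real) \<Rightarrow> ('m::finite \<Rightarrow> 'n \<Rightarrow> real) \<Rightarrow> ('m \<Rightarrow> real) \<Rightarrow> real" where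
  "lp_value lam r A b = Sup ((\<lambda>x. \<Sum>j\<in>UNIV. r j * x j) ` {x. lp_feasible lam A b x})"

definition lp_optimal ::
  "('n::finite \<Rightarrow> real) \<Rightarrow> ('n \<Rightarrow> real) \<Rightarrow> ('m::finite \<Rightarrow> 'n \<Rightarrow> real) \<Rightarrow> ('m \<Rightarrow> real) \<Rightarrow> ('n \<Rightarrow> real) \<Rightarrow> bool" where
  "lp_optimal lam r A b x \<longleftrightarrow> lp_feasible lam A b x \<and>
     (\<forall>y. lp_feasible lam A b y \<longrightarrow> (\<Sum>j\<in>UNIV. r j * y j) \<le> (\<Sum>j\<in>UNIV. r j * x j))"

definition v_DLP ::
  "('n::finite \<Rightarrow> real) \<Rightarrow> ('n \<Rightarrow> real) \<Rightarrow> ('m::finite \<Rightarrow> 'n \<Rightarrow> real) \<Rightarrow> ('m \<Rightarrow> real) \<Rightarrow> nat \<Rightarrow> real" where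
  "v_DLP lam r A C T = real T * lp_value lam r A (\<lambda>l. C l / real T)"

(* class of an arrival in the superposed Poisson stream: j with probability lam j / sum_k lam k *)
definition class_pmf :: "('n::finite \<Rightarrow> real) \<Rightarrow> 'n pmf" where
  "class_pmf lam = embed_pmf (\<lambda>j. lam j / (\<Sum>k\<in>UNIV. lam k))"

(* state = (remaining capacity, accumulated revenue); one arrival under
   acceptance probabilities x j / lam j, accepted only if capacity suffices *)
definition arrival ::
  "('n::finite \<Rightarrow> real) \<Rightarrow> ('n \<Rightarrow> real) \<Rightarrow> ('m::finite \<Rightarrow> 'n \<Rightarrow> real) \<Rightarrow> ('n \<Rightarrow> real)
   \<Rightarrow> ('m \<Rightarrow> real) \<times> real \<Rightarrow> (('m \<Rightarrow> real) \<times> real) pmf" where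
  "arrival lam r A x s =
     class_pmf lam \<bind> (\<lambda>j. bernoulli_pmf (x j / lam j) \<bind> (\<lambda>acc.
       return_pmf (if acc \<and> (\<forall>l. A l j \<le> fst s l)
                   then ((\<lambda>l. fst s l - A l j), snd s + r j) else s)))"

primrec arrivals ::
  "('n::finite \<Rightarrow> real) \<Rightarrow> ('n \<Rightarrow> real) \<Rightarrow> ('m::finite \<Rightarrow> 'n \<Rightarrow> real) \<Rightarrow> ('n \<Rightarrow> real)
   \<Rightarrow> nat \<Rightarrow> ('m \<Rightarrow> real) \<times> real \<Rightarrow> (('m \<Rightarrow> real) \<times> real) pmf" where
  "arrivals lam r A x 0 s = return_pmf s"
| "arrivals lam r A x (Suc k) s = arrivals lam r A x k s \<bind> arrival lam r A x"

(* one unit period [t,t+1): Poisson(sum_j lam_j) many arrivals, processed in order *)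
definition period ::
  "('n::finite \<Rightarrow> real) \<Rightarrow> ('n \<Rightarrow> real) \<Rightarrow> ('m::finite \<Rightarrow> 'n \<Rightarrow> real) \<Rightarrow> ('n \<Rightarrow> real)
   \<Rightarrow> ('m \<Rightarrow> real) \<times> real \<Rightarrow> (('m \<Rightarrow> real) \<times> real) pmf" where
  "period lam r A x s = poisson_pmf (\<Sum>k\<in>UNIV. lam k) \<bind> (\<lambda>N. arrivals lam r A x N s)"

(* state distribution after the first t periods of the FR policy with horizon T;
   sel is the LP solver: sel b is the chosen optimal solution for right-hand side b *)
primrec fr_run ::
  "('n::finite \<Rightarrow> real) \<Rightarrow> ('n \<Rightarrow> real) \<Rightarrow> ('m::finite \<Rightarrow> 'n \<Rightarrow> real)
   \<Rightarrow> (('m \<Rightarrow> real) \<Rightarrow> ('n \<Rightarrow> real)) \<Rightarrow> ('m \<Rightarrow> real) \<Rightarrow> nat \<Rightarrow> nat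
   \<Rightarrow> (('m \<Rightarrow> real) \<times> real) pmf" where
  "fr_run lam r A sel C T 0 = return_pmf (C, 0)"
| "fr_run lam r A sel C T (Suc t) =
     fr_run lam r A sel C T t \<bind>
       (\<lambda>s. period lam r A (sel (\<lambda>l. fst s l / real (T - t))) s)"

definition v_FR ::
  "('n::finite \<Rightarrow> real) \<Rightarrow> ('n \<Rightarrow> real) \<Rightarrow> ('m::finite \<Rightarrow> 'n \<Rightarrow> real)
   \<Rightarrow> (('m \<Rightarrow> real) \<Rightarrow> ('n \<Rightarrow> real)) \<Rightarrow> ('m \<Rightarrow> real) \<Rightarrow> nat \<Rightarrow> real" where
  "v_FR lam r A sel C T = measure_pmf.expectation (fr_run lam r A sel C T T) snd"

end

theory Submission
  imports Defs
begin


lemma poisson_sums0: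
  fixes L :: real assumes "0 < L"
  shows "(\<lambda>k. L ^ k / fact k * exp (-L)) sums 1"
proof -
  have "(\<lambda>n. L ^ n /\<^sub>R fact n) sums exp L" by (rule exp_converges)
  moreover have "(\<lambda>n. L ^ n /\<^sub>R fact n) = (\<lambda>n. L ^ n / fact n)" by (rule ext) (simp add: field_simps)
  ultimately have "(\<lambda>n. L ^ n / fact n) sums exp L" by simp
  from sums_mult2[OF this, of "exp (-L)"] show ?thesis by (simp add: exp_minus)
qed

lemma poisson_sums1:
  fixes L :: real assumes "0 < L"
  shows "(\<lambda>k. real k * (L ^ k / fact k * exp (-L))) sums L"
proof (rule sums_Suc_imp)
  show "(\<lambda>k. real (Suc k) * (L ^ Suc k / fact (Suc k) * exp (-L))) sums L"
  proof -
    have e: "real (Suc k) * (L ^ Suc k / fact (Suc k) * exp (-L)) = L * (L ^ k / fact k * exp (-L))" for k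
    proof -
      have "fact (Suc k) = real (Suc k) * (fact k :: real)" by simp
      hence "real (Suc k) / fact (Suc k) = 1 / (fact k :: real)" by simp
      thus ?thesis by (simp add: field_simps del: of_nat_Suc fact_Suc)
    qed
    show ?thesis unfolding e using sums_mult[OF poisson_sums0[OF assms], of L] by simp
  qed
qed simp

lemma poisson_sums2:
  fixes L :: real assumes "0 < L"
  shows "(\<lambda>k. real k * (real k - 1) * (L ^ k / fact k * exp (-L))) sums (L^2)"
proof (rule sums_Suc_imp)
  show "(\<lambda>k. real (Suc k) * (real (Suc k) - 1) * (L ^ Suc k / fact (Suc k) * exp (-L))) sums L^2"
  proof (rule sums_Suc_imp)
    have e: "real (Suc (Suc k)) * (real (Suc (Suc k)) - 1) * (L ^ Suc (Suc k) / fact (Suc (Suc k)) * exp (-L)) = L^2 * (L ^ k / fact k * exp (-L))" for k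
    proof -
      have "real (Suc (Suc k)) * (real (Suc (Suc k)) - 1) * (L ^ Suc (Suc k) / fact (Suc (Suc k)) * exp (-L))
         = real (Suc (Suc k)) * real (Suc k) * (L * L * L ^ k / (real (Suc (Suc k)) * (real (Suc k) * fact k)) * exp (-L))"
        by simp
      also have "\<dots> = L^2 * (L ^ k / fact k * exp (-L))"
        by (simp add: field_simps power2_eq_square del: of_nat_Suc)
      finally show ?thesis .
    qed
    show "(\<lambda>k. real (Suc (Suc k)) * (real (Suc (Suc k)) - 1) * (L ^ Suc (Suc k) / fact (Suc (Suc k)) * exp (-L))) sums L^2"
      unfolding e using sums_mult[OF poisson_sums0[OF assms], of "L^2"] by simp
  qed simp
qed simp

lemma poisson_mom1:
  fixes L :: real assumes "0 < L"
  shows "(\<integral>\<^sup>+N. ennreal (real N) \<partial>measure_pmf (poisson_pmf L)) = ennreal L"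
proof -
  have "(\<integral>\<^sup>+N. ennreal (real N) \<partial>measure_pmf (poisson_pmf L))
     = (\<Sum>k. ennreal (real k * (L ^ k / fact k * exp (-L))))"
    unfolding nn_integral_measure_pmf nn_integral_count_space_nat
    using assms by (simp add: pmf_poisson ennreal_mult'[symmetric] mult.commute)
  also have "\<dots> = ennreal L"
    by (rule suminf_ennreal_eq[OF _ poisson_sums1[OF assms]]) (use assms in simp)
  finally show ?thesis .
qed

lemma poisson_mom2:
  fixes L :: real assumes "0 < L"
  shows "(\<integral>\<^sup>+N. ennreal (real N ^ 2) \<partial>measure_pmf (poisson_pmf L)) = ennreal (L + L^2)"
proof -
  have s: "(\<lambda>k. real k ^ 2 * (L ^ k / fact k * exp (-L))) sums (L + L^2)"
  proof -
    have "(\<lambda>k. real k * (L ^ k / fact k * exp (-L)) + real k * (real k - 1) * (L ^ k / fact k * exp (-L))) sums (L + L^2)"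
      by (rule sums_add[OF poisson_sums1[OF assms] poisson_sums2[OF assms]])
    moreover have "real k * (L ^ k / fact k * exp (-L)) + real k * (real k - 1) * (L ^ k / fact k * exp (-L)) = real k ^ 2 * (L ^ k / fact k * exp (-L))" for k
      by (simp add: field_simps power2_eq_square)
    ultimately show ?thesis by simp
  qed
  have "(\<integral>\<^sup>+N. ennreal (real N ^ 2) \<partial>measure_pmf (poisson_pmf L))
     = (\<Sum>k. ennreal (real k ^ 2 * (L ^ k / fact k * exp (-L))))"
    unfolding nn_integral_measure_pmf nn_integral_count_space_nat
    using assms by (simp add: pmf_poisson ennreal_mult'[symmetric] mult.commute)
  also have "\<dots> = ennreal (L + L^2)"
    by (rule suminf_ennreal_eq[OF _ s]) (use assms in simp)
  finally show ?thesis .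
qed


locale nrm =
  fixes lam r :: "'n::finite \<Rightarrow> real" and A :: "'m::finite \<Rightarrow> 'n \<Rightarrow> real"
  assumes lam_pos: "\<And>j. 0 < lam j" and r_nn: "\<And>j. 0 \<le> r j" and A_nn: "\<And>l j. 0 \<le> A l j"
begin

definition Lam :: real where "Lam = (\<Sum>k\<in>UNIV. lam k)"

lemma Lam_pos: "0 < Lam"
  unfolding Lam_def by (rule sum_pos) (auto intro: lam_pos)

lemma pmf_class: "pmf (class_pmf lam) j = lam j / Lam"
proof -
  have "(\<integral>\<^sup>+x. ennreal (lam x / Lam) \<partial>count_space UNIV) = 1"
  proof -
    have "(\<integral>\<^sup>+x. ennreal (lam x / Lam) \<partial>count_space UNIV) = (\<Sum>x\<in>UNIV. ennreal (lam x / Lam))"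
      by (simp add: nn_integral_count_space_finite)
    also have "\<dots> = ennreal (\<Sum>x\<in>UNIV. lam x / Lam)"
      using lam_pos Lam_pos by (intro sum_ennreal) (auto intro: less_imp_le)
    also have "(\<Sum>x\<in>UNIV. lam x / Lam) = 1"
      using Lam_pos by (simp add: sum_divide_distrib[symmetric] Lam_def)
    finally show ?thesis by simp
  qed
  thus ?thesis unfolding class_pmf_def Lam_def[symmetric]
    using lam_pos Lam_pos by (subst pmf_embed_pmf) (auto intro: less_imp_le)
qed

lemma set_class: "set_pmf (class_pmf lam) = UNIV"
  using Lam_pos by (auto simp: set_pmf_eq pmf_class) (metis lam_pos less_irrefl)

lemma nn_integral_class:
  "(\<integral>\<^sup>+i. f i \<partial>measure_pmf (class_pmf lam)) = (\<Sum>i\<in>UNIV. f i * ennreal (lam i / Lam))"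
  by (subst nn_integral_measure_pmf_finite) (auto simp: set_class pmf_class)

definition step :: "((('m \<Rightarrow> real) \<times> real) \<times> ('n \<Rightarrow> real)) \<times> nat \<Rightarrow> 'n \<Rightarrow> bool
    \<Rightarrow> ((('m \<Rightarrow> real) \<times> real) \<times> ('n \<Rightarrow> real)) \<times> nat" where
  "step y i acc = (let s = fst (fst y); n = snd (fst y) in
     ((if acc \<and> (\<forall>l. A l i \<le> fst s l) then ((\<lambda>l. fst s l - A l i), snd s + r i) else s,
       if acc then n(i := n i + 1) else n), Suc (snd y)))"

definition aug_arrival where
  "aug_arrival x y = class_pmf lam \<bind> (\<lambda>i. bernoulli_pmf (x i / lam i) \<bind> (\<lambda>acc. return_pmf (step y i acc)))"

primrec aug_arrivals where
  "aug_arrivals x 0 y = return_pmf y"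
| "aug_arrivals x (Suc N) y = aug_arrivals x N y \<bind> aug_arrival x"

definition aug_period where
  "aug_period x s = poisson_pmf Lam \<bind> (\<lambda>N. aug_arrivals x N ((s, \<lambda>_. 0), 0))"

lemma set_aug_arrival: "z \<in> set_pmf (aug_arrival x w) \<Longrightarrow> \<exists>i acc. z = step w i acc"
  unfolding aug_arrival_def by auto

lemma map_aug_arrival: "map_pmf (\<lambda>y. fst (fst y)) (aug_arrival x y) = arrival lam r A x (fst (fst y))"
  unfolding aug_arrival_def arrival_def map_bind_pmf
  by (simp add: step_def Let_def)

lemma map_aug_arrivals: "map_pmf (\<lambda>y. fst (fst y)) (aug_arrivals x N y) = arrivals lam r A x N (fst (fst y))"
proof (induction N)
  case 0 then show ?case by simp
next
  case (Suc N)
  have "map_pmf (\<lambda>y. fst (fst y)) (aug_arrivals x (Suc N) y)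
      = aug_arrivals x N y \<bind> (\<lambda>z. arrival lam r A x (fst (fst z)))"
    by (simp add: map_bind_pmf map_aug_arrival)
  also have "\<dots> = map_pmf (\<lambda>y. fst (fst y)) (aug_arrivals x N y) \<bind> arrival lam r A x"
    by (simp add: bind_map_pmf)
  finally show ?case using Suc by simp
qed

lemma map_aug_period: "map_pmf (\<lambda>y. fst (fst y)) (aug_period x s) = period lam r A x s"
  unfolding aug_period_def period_def Lam_def map_bind_pmf map_aug_arrivals by simp

lemma nn_integral_aug_arrival:
  assumes "\<And>i. 0 \<le> x i" "\<And>i. x i \<le> lam i"
  shows "(\<integral>\<^sup>+z. f z \<partial>measure_pmf (aug_arrival x y)) =
    (\<Sum>i\<in>UNIV. (f (step y i True) * ennreal (x i / lam i) + f (step y i False) * ennreal (1 - x i / lam i)) * ennreal (lam i / Lam))"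
proof -
  have p: "0 \<le> x i / lam i" "x i / lam i \<le> 1" for i
    using assms(1,2)[of i] lam_pos[of i] by (auto simp: field_simps)
  show ?thesis unfolding aug_arrival_def
    by (simp add: nn_integral_class p)
qed

end

context nrm begin

definition Z :: "('n \<Rightarrow> real) \<Rightarrow> 'm \<Rightarrow> real" where "Z n l = (\<Sum>j\<in>UNIV. A l j * n j)"

definition Ind :: "('m \<Rightarrow> real) \<Rightarrow> ('n \<Rightarrow> real) \<Rightarrow> 'n \<Rightarrow> bool" where
  "Ind c n j \<longleftrightarrow> (\<exists>l. 0 < A l j \<and> c l - A l j < Z n l)"

definition sinv where
  "sinv c R0 y \<longleftrightarrow> (let s = fst (fst y); n = snd (fst y) in
     (\<forall>j. 0 \<le> n j) \<and> (\<Sum>j\<in>UNIV. n j) \<le> real (snd y) \<and> (\<forall>l. 0 \<le> fst s l) \<and>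
     (\<forall>l. c l - Z n l \<le> fst s l) \<and> snd s \<le> R0 + (\<Sum>j\<in>UNIV. r j * n j) \<and>
     R0 + (\<Sum>j\<in>UNIV. (if Ind c n j then 0 else r j * n j)) \<le> snd s)"

lemma Z_mono: "(\<And>j. n j \<le> n' j) \<Longrightarrow> Z n l \<le> Z n' l"
  unfolding Z_def by (intro sum_mono mult_left_mono) (auto intro: A_nn)

lemma Ind_mono: "(\<And>j. n j \<le> n' j) \<Longrightarrow> Ind c n j \<Longrightarrow> Ind c n' j"
  unfolding Ind_def using Z_mono by (meson less_le_trans)

lemma Z_upd: "Z (n(i := n i + 1)) l = Z n l + A l i"
proof -
  have "Z (n(i := n i + 1)) l = (\<Sum>j\<in>UNIV. A l j * n j + (if j = i then A l i else 0))"
    unfolding Z_def by (intro sum.cong) (auto simp: algebra_simps)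
  thus ?thesis by (simp add: sum.distrib Z_def)
qed

lemma sum_upd: fixes g n :: "'n \<Rightarrow> real" shows "(\<Sum>j\<in>UNIV. g j * (n(i := n i + 1)) j) = (\<Sum>j\<in>UNIV. g j * n j) + g i"
proof -
  have "(\<Sum>j\<in>UNIV. g j * (n(i := n i + 1)) j) = (\<Sum>j\<in>UNIV. g j * n j + (if j = i then g i else 0))"
  proof (intro sum.cong refl)
    fix j show "g j * (n(i := n i + 1)) j = g j * n j + (if j = i then g i else 0)"
      by (cases "j = i") (simp_all add: algebra_simps)
  qed
  thus ?thesis by (simp add: sum.distrib)
qed

lemma sinv_init: "(\<And>l. 0 \<le> c l) \<Longrightarrow> sinv c R0 (((c, R0), \<lambda>_. 0), 0)"
  unfolding sinv_def Let_def by (auto simp: Z_def cong: if_cong)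

lemma sinv_step:
  assumes I: "sinv c R0 y"
  shows "sinv c R0 (step y i acc)"
proof -
  obtain s n k where y: "y = ((s, n), k)" by (metis prod.collapse)
  have n0: "\<And>j. 0 \<le> n j" and sk: "(\<Sum>j\<in>UNIV. n j) \<le> real k" and s0: "\<And>l. 0 \<le> fst s l"
    and cz: "\<And>l. c l - Z n l \<le> fst s l" and up: "snd s \<le> R0 + (\<Sum>j\<in>UNIV. r j * n j)"
    and lo: "R0 + (\<Sum>j\<in>UNIV. (if Ind c n j then 0 else r j * n j)) \<le> snd s"
    using I unfolding sinv_def y Let_def by (auto cong: if_cong)
  let ?n' = "n(i := n i + 1)"
  have nle: "\<And>j. n j \<le> ?n' j" by auto
  have n'0: "\<And>j. 0 \<le> ?n' j" using n0 by (auto simp: add_nonneg_nonneg)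
  have sk': "(\<Sum>j\<in>UNIV. ?n' j) \<le> real (Suc k)"
    using sum_upd[of "\<lambda>_. 1" n i] sk by simp
  show ?thesis
  proof (cases acc)
    case False
    thus ?thesis using n0 sk s0 cz up lo unfolding sinv_def step_def y Let_def by (auto cong: if_cong)
  next
    case True
    note acc = True
    show ?thesis
    proof (cases "\<forall>l. A l i \<le> fst s l")
      case fits: True
      have lo': "R0 + (\<Sum>j\<in>UNIV. (if Ind c ?n' j then 0 else r j * ?n' j)) \<le> snd s + r i"
      proof -
        have "(\<Sum>j\<in>UNIV. (if Ind c ?n' j then 0 else r j * ?n' j))
            \<le> (\<Sum>j\<in>UNIV. (if Ind c n j then 0 else r j * n j) + (if j = i then r i else 0))"
        proof (rule sum_mono)
          fix j
          have "Ind c n j \<Longrightarrow> Ind c ?n' j" using Ind_mono[of n ?n' c j] nle by blast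
          thus "(if Ind c ?n' j then 0 else r j * ?n' j) \<le> (if Ind c n j then 0 else r j * n j) + (if j = i then r i else 0)"
            using r_nn[of j] n0[of j] by (auto simp: algebra_simps)
        qed
        also have "\<dots> = (\<Sum>j\<in>UNIV. (if Ind c n j then 0 else r j * n j)) + r i"
          by (simp add: sum.distrib)
        finally show ?thesis using lo by simp
      qed
      have cz': "\<And>l. c l - Z ?n' l \<le> fst s l - A l i" using cz Z_upd[of n i] by (smt (verit))
      have up': "snd s + r i \<le> R0 + (\<Sum>j\<in>UNIV. r j * ?n' j)"
        using up sum_upd[of r n i] by simp
      have s0': "\<And>l. 0 \<le> fst s l - A l i" using fits by simp
      show ?thesis using acc fits n'0 sk' s0' cz' up' lo' unfolding sinv_def step_def y Let_def
        by (auto cong: if_cong)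
    next
      case nf: False
      then obtain l0 where l0: "fst s l0 < A l0 i" by (auto simp: not_le)
      have "Ind c ?n' i"
        unfolding Ind_def
      proof (intro exI conjI)
        show "0 < A l0 i" using l0 s0[of l0] by simp
        show "c l0 - A l0 i < Z ?n' l0" using l0 cz[of l0] Z_upd[of n i l0] A_nn[of l0 i] by simp
      qed
      have lo': "R0 + (\<Sum>j\<in>UNIV. (if Ind c ?n' j then 0 else r j * ?n' j)) \<le> snd s"
      proof -
        have "(\<Sum>j\<in>UNIV. (if Ind c ?n' j then 0 else r j * ?n' j))
            \<le> (\<Sum>j\<in>UNIV. (if Ind c n j then 0 else r j * n j))"
        proof (rule sum_mono)
          fix j
          have "Ind c n j \<Longrightarrow> Ind c ?n' j" using Ind_mono[of n ?n' c j] nle by blast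
          thus "(if Ind c ?n' j then 0 else r j * ?n' j) \<le> (if Ind c n j then 0 else r j * n j)"
            using r_nn[of j] n0[of j] \<open>Ind c ?n' i\<close> by auto
        qed
        thus ?thesis using lo by simp
      qed
      have up': "snd s \<le> R0 + (\<Sum>j\<in>UNIV. r j * ?n' j)"
        using up r_nn[of i] sum_upd[of r n i] by linarith
      have cz': "\<And>l. c l - Z ?n' l \<le> fst s l" using cz Z_upd A_nn by (smt (verit))
      show ?thesis using acc nf n'0 sk' s0 cz' up' lo' unfolding sinv_def step_def y Let_def
        by (auto cong: if_cong)
    qed
  qed
qed

lemma sinv_aug_arrival: "sinv c R0 y \<Longrightarrow> z \<in> set_pmf (aug_arrival x y) \<Longrightarrow> sinv c R0 z"
  unfolding aug_arrival_def by (auto intro: sinv_step)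

lemma sinv_aug_arrivals: "sinv c R0 y \<Longrightarrow> z \<in> set_pmf (aug_arrivals x N y) \<Longrightarrow> sinv c R0 z"
proof (induction N arbitrary: z)
  case (Suc N)
  then obtain w where "w \<in> set_pmf (aug_arrivals x N y)" "z \<in> set_pmf (aug_arrival x w)"
    by (simp only: aug_arrivals.simps set_bind_pmf) blast
  thus ?case using Suc sinv_aug_arrival by blast
qed simp

lemma k_aug_arrivals: "z \<in> set_pmf (aug_arrivals x N y) \<Longrightarrow> snd z = snd y + N"
proof (induction N arbitrary: z)
  case (Suc N)
  then obtain w where "w \<in> set_pmf (aug_arrivals x N y)" "z \<in> set_pmf (aug_arrival x w)"
    by (simp only: aug_arrivals.simps set_bind_pmf) blast
  thus ?case using Suc by (auto simp: aug_arrival_def step_def Let_def)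
qed simp

end

context nrm begin

lemma ennreal_comb:
  fixes a b p q w :: real
  assumes "0 \<le> a" "0 \<le> b" "0 \<le> p" "0 \<le> q" "0 \<le> w"
  shows "(ennreal a * ennreal p + ennreal b * ennreal q) * ennreal w = ennreal ((a * p + b * q) * w)"
  using assms by (simp add: ennreal_mult ennreal_plus mult_nonneg_nonneg add_nonneg_nonneg)

lemma nn_integral_aug_arrival_real:
  assumes x0: "\<And>i. 0 \<le> x i" and xl: "\<And>i. x i \<le> lam i"
    and f0: "\<And>z. 0 \<le> f z"
  shows "(\<integral>\<^sup>+z. ennreal (f z) \<partial>measure_pmf (aug_arrival x y)) =
    ennreal ((\<Sum>i\<in>UNIV. f (step y i True) * x i + f (step y i False) * (lam i - x i)) / Lam)"
proof -
  have p: "0 \<le> x i / lam i" "x i / lam i \<le> 1" for i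
    using x0[of i] xl[of i] lam_pos[of i] by (auto simp: field_simps)
  have "(\<integral>\<^sup>+z. ennreal (f z) \<partial>measure_pmf (aug_arrival x y)) =
    (\<Sum>i\<in>UNIV. ennreal ((f (step y i True) * (x i / lam i) + f (step y i False) * (1 - x i / lam i)) * (lam i / Lam)))"
    unfolding nn_integral_aug_arrival[of x, OF x0 xl, where f="\<lambda>z. ennreal (f z)" and y=y]
    by (intro sum.cong refl ennreal_comb) (use p f0 lam_pos Lam_pos in \<open>auto intro: less_imp_le\<close>)
  also have "\<dots> = ennreal (\<Sum>i\<in>UNIV. (f (step y i True) * (x i / lam i) + f (step y i False) * (1 - x i / lam i)) * (lam i / Lam))"
  proof (intro sum_ennreal)
    fix i
    have q: "0 \<le> 1 - x i / lam i" using p(2)[of i] by simp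
    show "0 \<le> (f (step y i True) * (x i / lam i) + f (step y i False) * (1 - x i / lam i)) * (lam i / Lam)"
      using p(1)[of i] q f0 lam_pos[of i] Lam_pos x0[of i] by (intro mult_nonneg_nonneg add_nonneg_nonneg divide_nonneg_nonneg) auto
  qed
  also have "(\<Sum>i\<in>UNIV. (f (step y i True) * (x i / lam i) + f (step y i False) * (1 - x i / lam i)) * (lam i / Lam))
     = (\<Sum>i\<in>UNIV. f (step y i True) * x i + f (step y i False) * (lam i - x i)) / Lam"
    unfolding sum_divide_distrib
  proof (intro sum.cong refl)
    fix i
    show "(f (step y i True) * (x i / lam i) + f (step y i False) * (1 - x i / lam i)) * (lam i / Lam) =
         (f (step y i True) * x i + f (step y i False) * (lam i - x i)) / Lam"
      using lam_pos[of i] Lam_pos by (simp add: field_simps)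
  qed
  finally show ?thesis .
qed

definition nnn :: "((('m \<Rightarrow> real) \<times> real) \<times> ('n \<Rightarrow> real)) \<times> nat \<Rightarrow> bool" where
  "nnn y \<longleftrightarrow> (\<forall>j. 0 \<le> snd (fst y) j)"

lemma nnn_step: "nnn y \<Longrightarrow> nnn (step y i acc)"
  unfolding nnn_def step_def Let_def by (auto simp: add_nonneg_nonneg)

lemma nnn_aug_arrivals: "nnn y \<Longrightarrow> z \<in> set_pmf (aug_arrivals x N y) \<Longrightarrow> nnn z"
proof (induction N arbitrary: z)
  case (Suc N)
  then obtain w where "w \<in> set_pmf (aug_arrivals x N y)" "z \<in> set_pmf (aug_arrival x w)"
    by (simp only: aug_arrivals.simps set_bind_pmf) blast
  thus ?case using Suc set_aug_arrival nnn_step by metis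
qed simp

lemma mom_n_arrival:
  assumes x0: "\<And>i. 0 \<le> x i" and xl: "\<And>i. x i \<le> lam i" and ny: "nnn y"
  shows "(\<integral>\<^sup>+z. ennreal (snd (fst z) j) \<partial>measure_pmf (aug_arrival x y)) = ennreal (snd (fst y) j + x j / Lam)"
proof -
  have "(\<integral>\<^sup>+z. ennreal (max 0 (snd (fst z) j)) \<partial>measure_pmf (aug_arrival x y)) =
    ennreal ((\<Sum>i\<in>UNIV. max 0 (snd (fst (step y i True)) j) * x i + max 0 (snd (fst (step y i False)) j) * (lam i - x i)) / Lam)"
    by (rule nn_integral_aug_arrival_real[OF x0 xl]) simp
  also have "(\<Sum>i\<in>UNIV. max 0 (snd (fst (step y i True)) j) * x i + max 0 (snd (fst (step y i False)) j) * (lam i - x i))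
     = (\<Sum>i\<in>UNIV. snd (fst y) j * lam i + (if i = j then x j else 0))"
  proof (intro sum.cong refl)
    fix i
    have "0 \<le> snd (fst y) j" using ny by (simp add: nnn_def)
    thus "max 0 (snd (fst (step y i True)) j) * x i + max 0 (snd (fst (step y i False)) j) * (lam i - x i) =
      snd (fst y) j * lam i + (if i = j then x j else 0)"
      by (auto simp: step_def Let_def algebra_simps)
  qed
  also have "\<dots> = snd (fst y) j * Lam + x j" by (simp add: sum.distrib sum_distrib_left Lam_def)
  finally have e: "(\<integral>\<^sup>+z. ennreal (max 0 (snd (fst z) j)) \<partial>measure_pmf (aug_arrival x y)) = ennreal (snd (fst y) j + x j / Lam)"
    using Lam_pos by (simp add: field_simps)
  have "(\<integral>\<^sup>+z. ennreal (snd (fst z) j) \<partial>measure_pmf (aug_arrival x y)) = (\<integral>\<^sup>+z. ennreal (max 0 (snd (fst z) j)) \<partial>measure_pmf (aug_arrival x y))"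
    by (intro nn_integral_cong) (simp add: ennreal_max_0)
  thus ?thesis using e by simp
qed

lemma mom_n_arrivals:
  assumes x0: "\<And>i. 0 \<le> x i" and xl: "\<And>i. x i \<le> lam i" and ny: "nnn y"
  shows "(\<integral>\<^sup>+z. ennreal (snd (fst z) j) \<partial>measure_pmf (aug_arrivals x N y)) = ennreal (snd (fst y) j + real N * x j / Lam)"
proof (induction N)
  case 0 then show ?case by simp
next
  case (Suc N)
  have "(\<integral>\<^sup>+z. ennreal (snd (fst z) j) \<partial>measure_pmf (aug_arrivals x (Suc N) y))
      = (\<integral>\<^sup>+w. ennreal (snd (fst w) j + x j / Lam) \<partial>measure_pmf (aug_arrivals x N y))"
    by (simp, intro nn_integral_cong_AE) (auto simp: AE_measure_pmf_iff intro!: mom_n_arrival[OF x0 xl] nnn_aug_arrivals[OF ny])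
  also have "\<dots> = (\<integral>\<^sup>+w. ennreal (snd (fst w) j) + ennreal (x j / Lam) \<partial>measure_pmf (aug_arrivals x N y))"
    using x0[of j] Lam_pos
    by (intro nn_integral_cong_AE) (auto simp: AE_measure_pmf_iff ennreal_plus nnn_def dest!: nnn_aug_arrivals[OF ny])
  also have "\<dots> = ennreal (snd (fst y) j + real N * x j / Lam) + ennreal (x j / Lam)"
    by (subst nn_integral_add) (auto simp: Suc)
  also have "\<dots> = ennreal (snd (fst y) j + real (Suc N) * x j / Lam)"
    using x0[of j] Lam_pos ny by (subst ennreal_plus[symmetric]) (auto simp: nnn_def field_simps)
  finally show ?case .
qed

lemma mom_n_period:
  assumes x0: "\<And>i. 0 \<le> x i" and xl: "\<And>i. x i \<le> lam i"
  shows "(\<integral>\<^sup>+z. ennreal (snd (fst z) j) \<partial>measure_pmf (aug_period x s)) = ennreal (x j)"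
proof -
  have "(\<integral>\<^sup>+z. ennreal (snd (fst z) j) \<partial>measure_pmf (aug_period x s))
      = (\<integral>\<^sup>+N. ennreal (real N) * ennreal (x j / Lam) \<partial>measure_pmf (poisson_pmf Lam))"
    unfolding aug_period_def using x0[of j] Lam_pos
    by (simp, intro nn_integral_cong) (simp add: mom_n_arrivals[OF x0 xl] nnn_def ennreal_mult[symmetric] times_divide_eq_right[symmetric] del: times_divide_eq_right)
  also have "\<dots> = ennreal Lam * ennreal (x j / Lam)"
    by (simp add: nn_integral_multc poisson_mom1[OF Lam_pos])
  also have "\<dots> = ennreal (x j)" using Lam_pos x0[of j] by (simp add: ennreal_mult''[symmetric])
  finally show ?thesis .
qed

lemma k_period:
  "(\<integral>\<^sup>+z. g (snd z) \<partial>measure_pmf (aug_period x s)) = (\<integral>\<^sup>+N. g N \<partial>measure_pmf (poisson_pmf Lam))"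
  unfolding aug_period_def
  by (simp, intro nn_integral_cong) (subst nn_integral_cong_AE[where v="\<lambda>_. g _"],
      auto simp: AE_measure_pmf_iff dest: k_aug_arrivals)

end


lemma pmf_int_sum:
  assumes "finite I" "\<And>z i. z \<in> set_pmf M \<Longrightarrow> i \<in> I \<Longrightarrow> 0 \<le> h i z"
  shows "(\<integral>\<^sup>+z. ennreal (\<Sum>i\<in>I. h i z) \<partial>measure_pmf M) = (\<Sum>i\<in>I. \<integral>\<^sup>+z. ennreal (h i z) \<partial>measure_pmf M)"
proof -
  have "(\<integral>\<^sup>+z. ennreal (\<Sum>i\<in>I. h i z) \<partial>measure_pmf M) = (\<integral>\<^sup>+z. (\<Sum>i\<in>I. ennreal (h i z)) \<partial>measure_pmf M)"
    using assms by (intro nn_integral_cong_AE) (auto simp: AE_measure_pmf_iff)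
  also have "\<dots> = (\<Sum>i\<in>I. \<integral>\<^sup>+z. ennreal (h i z) \<partial>measure_pmf M)"
    by (rule nn_integral_sum) simp
  finally show ?thesis .
qed

lemma pmf_int_add:
  assumes "\<And>z. z \<in> set_pmf M \<Longrightarrow> 0 \<le> f z" "\<And>z. z \<in> set_pmf M \<Longrightarrow> 0 \<le> g z"
  shows "(\<integral>\<^sup>+z. ennreal (f z + g z) \<partial>measure_pmf M) = (\<integral>\<^sup>+z. ennreal (f z) \<partial>measure_pmf M) + (\<integral>\<^sup>+z. ennreal (g z) \<partial>measure_pmf M)"
proof -
  have "(\<integral>\<^sup>+z. ennreal (f z + g z) \<partial>measure_pmf M) = (\<integral>\<^sup>+z. ennreal (f z) + ennreal (g z) \<partial>measure_pmf M)"
    using assms by (intro nn_integral_cong_AE) (auto simp: AE_measure_pmf_iff)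
  also have "\<dots> = (\<integral>\<^sup>+z. ennreal (f z) \<partial>measure_pmf M) + (\<integral>\<^sup>+z. ennreal (g z) \<partial>measure_pmf M)"
    by (rule nn_integral_add) simp_all
  finally show ?thesis .
qed

lemma pmf_int_cmult:
  assumes "0 \<le> c"
  shows "(\<integral>\<^sup>+z. ennreal (c * f z) \<partial>measure_pmf M) = ennreal c * (\<integral>\<^sup>+z. ennreal (f z) \<partial>measure_pmf M)"
proof -
  have "(\<integral>\<^sup>+z. ennreal (c * f z) \<partial>measure_pmf M) = (\<integral>\<^sup>+z. ennreal c * ennreal (f z) \<partial>measure_pmf M)"
    using assms by (intro nn_integral_cong) (simp add: ennreal_mult')
  also have "\<dots> = ennreal c * (\<integral>\<^sup>+z. ennreal (f z) \<partial>measure_pmf M)"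
    by (rule nn_integral_cmult) simp
  finally show ?thesis .
qed

lemma pmf_int_mono:
  assumes "\<And>z. z \<in> set_pmf M \<Longrightarrow> f z \<le> g z"
  shows "(\<integral>\<^sup>+z. ennreal (f z) \<partial>measure_pmf M) \<le> (\<integral>\<^sup>+z. ennreal (g z) \<partial>measure_pmf M)"
  using assms by (intro nn_integral_mono_AE) (auto simp: AE_measure_pmf_iff ennreal_leI)

context nrm begin

lemma nnn_period: "z \<in> set_pmf (aug_period x s) \<Longrightarrow> nnn z"
proof -
  have i: "nnn ((s, \<lambda>_. 0), 0)" by (simp add: nnn_def)
  show "z \<in> set_pmf (aug_period x s) \<Longrightarrow> nnn z"
    unfolding aug_period_def by (auto intro: nnn_aug_arrivals[OF i])
qed

lemma sinv_period: "(\<And>l. 0 \<le> c l) \<Longrightarrow> z \<in> set_pmf (aug_period x (c, R0)) \<Longrightarrow> sinv c R0 z"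
proof -
  assume c: "\<And>l. 0 \<le> c l"
  have i: "sinv c R0 (((c, R0), \<lambda>_. 0), 0)" by (rule sinv_init) (use c in auto)
  show "z \<in> set_pmf (aug_period x (c, R0)) \<Longrightarrow> sinv c R0 z"
    unfolding aug_period_def by (auto intro: sinv_aug_arrivals[OF i])
qed

lemma EK2: "(\<integral>\<^sup>+z. ennreal (real (snd z) ^ 2) \<partial>measure_pmf (aug_period x s)) = ennreal (Lam + Lam^2)"
  using k_period[where g="\<lambda>N. ennreal (real N ^ 2)"] poisson_mom2[OF Lam_pos] by simp

lemma EZ:
  assumes x0: "\<And>i. 0 \<le> x i" and xl: "\<And>i. x i \<le> lam i"
  shows "(\<integral>\<^sup>+z. ennreal (Z (snd (fst z)) l) \<partial>measure_pmf (aug_period x s)) = ennreal (\<Sum>j\<in>UNIV. A l j * x j)"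
proof -
  have "(\<integral>\<^sup>+z. ennreal (Z (snd (fst z)) l) \<partial>measure_pmf (aug_period x s))
      = (\<Sum>j\<in>UNIV. \<integral>\<^sup>+z. ennreal (A l j * snd (fst z) j) \<partial>measure_pmf (aug_period x s))"
    unfolding Z_def by (rule pmf_int_sum) (auto dest!: nnn_period simp: nnn_def A_nn)
  also have "\<dots> = (\<Sum>j\<in>UNIV. ennreal (A l j * x j))"
    by (intro sum.cong refl) (simp add: pmf_int_cmult A_nn mom_n_period[OF x0 xl] ennreal_mult'[symmetric] x0 del: ennreal_mult')
  also have "\<dots> = ennreal (\<Sum>j\<in>UNIV. A l j * x j)"
    using A_nn x0 by (intro sum_ennreal) simp
  finally show ?thesis .
qed

end

context nrm begin

definition Bc :: real where "Bc = (Lam + Lam^2) / 2 + 2"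

definition gg :: "('m \<Rightarrow> real) \<Rightarrow> real \<Rightarrow> 'n \<Rightarrow> 'm \<Rightarrow> ((('m \<Rightarrow> real) \<times> real) \<times> ('n \<Rightarrow> real)) \<times> nat \<Rightarrow> real" where
  "gg c \<tau> j l z = (if A l j = 0 then 0 else if 2 * A l j \<le> c l then
      (1 / (2 * sqrt \<tau>)) * real (snd z) ^ 2 + (sqrt \<tau> / c l) * Z (snd (fst z)) l else snd (fst z) j)"

lemma Z_nonneg: "(\<And>j. 0 \<le> n j) \<Longrightarrow> 0 \<le> Z n l"
  unfolding Z_def by (intro sum_nonneg mult_nonneg_nonneg) (auto simp: A_nn)

lemma amgm: fixes n s :: real assumes "0 < s" shows "n \<le> (n^2 / s + s) / 2"
proof -
  have "0 \<le> (n - s)^2 / s" using assms by simp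
  also have "(n - s)^2 / s = n^2/s - 2 * n + s" using assms by (simp add: field_simps power2_eq_square)
  finally show ?thesis by simp
qed

lemma gg_nonneg:
  assumes "1 \<le> \<tau>" "sinv c R0 z"
  shows "0 \<le> gg c \<tau> j l z"
proof -
  have n0: "\<And>j. 0 \<le> snd (fst z) j" using assms(2) by (simp add: sinv_def Let_def)
  show ?thesis using assms(1) Z_nonneg[of "snd (fst z)" l, OF n0] n0[of j] A_nn[of l j]
    unfolding gg_def by (auto intro!: add_nonneg_nonneg mult_nonneg_nonneg divide_nonneg_nonneg)
qed

lemma gg_pointwise:
  assumes t1: "1 \<le> \<tau>" and I: "sinv c R0 z"
  shows "R0 + (\<Sum>j\<in>UNIV. r j * snd (fst z) j) \<le> snd (fst (fst z)) + (\<Sum>j\<in>UNIV. \<Sum>l\<in>UNIV. r j * gg c \<tau> j l z)"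
proof -
  define n where "n = snd (fst z)"
  define k where "k = real (snd z)"
  have n0: "\<And>j. 0 \<le> n j" and sk: "(\<Sum>j\<in>UNIV. n j) \<le> k"
    and cz: "\<And>l. c l - Z n l \<le> fst (fst (fst z)) l" and s0: "\<And>l. 0 \<le> fst (fst (fst z)) l"
    and lo: "R0 + (\<Sum>j\<in>UNIV. (if Ind c n j then 0 else r j * n j)) \<le> snd (fst (fst z))"
    using I by (auto simp: sinv_def Let_def n_def k_def cong: if_cong)
  have nk: "n j \<le> k" for j
    using sk member_le_sum[of j UNIV n] n0 by auto
  have st: "0 < sqrt \<tau>" using t1 by simp
  have per: "r j * n j \<le> (if Ind c n j then 0 else r j * n j) + (\<Sum>l\<in>UNIV. r j * gg c \<tau> j l z)" for j
  proof (cases "Ind c n j")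
    case False
    thus ?thesis using gg_nonneg[OF t1 I] r_nn[of j] by (auto intro!: sum_nonneg)
  next
    case True
    then obtain l0 where l0: "0 < A l0 j" "c l0 - A l0 j < Z n l0" unfolding Ind_def by blast
    have "n j \<le> gg c \<tau> j l0 z"
    proof (cases "2 * A l0 j \<le> c l0")
      case True
      have cpos: "0 < c l0" using True l0 by simp
      have "1 \<le> 2 * Z n l0 / c l0" using True l0 cpos by (simp add: field_simps)
      have "n j \<le> (n j ^ 2 / sqrt \<tau> + sqrt \<tau>) / 2" by (rule amgm[OF st])
      also have "\<dots> \<le> (k ^ 2 / sqrt \<tau> + sqrt \<tau> * (2 * Z n l0 / c l0)) / 2"
      proof -
        have "n j ^ 2 \<le> k ^ 2" using nk[of j] n0[of j] by (simp add: power_mono)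
        hence a: "n j ^ 2 / sqrt \<tau> \<le> k ^ 2 / sqrt \<tau>" using st by (simp add: divide_right_mono)
        have b: "sqrt \<tau> * 1 \<le> sqrt \<tau> * (2 * Z n l0 / c l0)"
          using \<open>1 \<le> 2 * Z n l0 / c l0\<close> st by (intro mult_left_mono) auto
        have "(n j ^ 2 / sqrt \<tau> + sqrt \<tau> * 1) / 2 \<le> (k ^ 2 / sqrt \<tau> + sqrt \<tau> * (2 * Z n l0 / c l0)) / 2"
          by (rule divide_right_mono[OF add_mono[OF a b]]) simp
        thus ?thesis by simp
      qed
      also have "\<dots> = gg c \<tau> j l0 z"
        using True l0 cpos st unfolding gg_def n_def[symmetric] k_def[symmetric] by (simp add: field_simps)
      finally show ?thesis .
    next
      case False
      thus ?thesis using l0 unfolding gg_def n_def by simp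
    qed
    also have "\<dots> \<le> (\<Sum>l\<in>UNIV. gg c \<tau> j l z)"
      using gg_nonneg[OF t1 I] by (intro member_le_sum) auto
    finally have "r j * n j \<le> r j * (\<Sum>l\<in>UNIV. gg c \<tau> j l z)" using r_nn[of j] by (rule mult_left_mono)
    thus ?thesis using True by (simp add: sum_distrib_left)
  qed
  have "R0 + (\<Sum>j\<in>UNIV. r j * n j) \<le> R0 + (\<Sum>j\<in>UNIV. (if Ind c n j then 0 else r j * n j) + (\<Sum>l\<in>UNIV. r j * gg c \<tau> j l z))"
    using per by (simp add: sum_mono)
  also have "\<dots> \<le> snd (fst (fst z)) + (\<Sum>j\<in>UNIV. \<Sum>l\<in>UNIV. r j * gg c \<tau> j l z)"
    using lo by (simp add: sum.distrib)
  finally show ?thesis by (simp add: n_def)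
qed

end

context nrm begin

lemma sinv_snd_nonneg:
  assumes "sinv c R0 z" "0 \<le> R0"
  shows "0 \<le> snd (fst (fst z))"
proof -
  have lo: "R0 + (\<Sum>j\<in>UNIV. if Ind c (snd (fst z)) j then 0 else r j * snd (fst z) j) \<le> snd (fst (fst z))"
    and n0: "\<forall>j. 0 \<le> snd (fst z) j"
    using assms(1) by (auto simp: sinv_def Let_def cong: if_cong)
  have "0 \<le> (\<Sum>j\<in>UNIV. if Ind c (snd (fst z)) j then 0 else r j * snd (fst z) j)"
    using n0 by (intro sum_nonneg) (auto simp: r_nn)
  thus ?thesis using lo assms(2) by linarith
qed

lemma gg_int:
  assumes c0: "\<And>l. 0 \<le> c l" and t1: "1 \<le> \<tau>" and x0: "\<And>i. 0 \<le> x i" and xl: "\<And>i. x i \<le> lam i"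
    and feas: "\<And>l. (\<Sum>j\<in>UNIV. A l j * x j) \<le> c l / \<tau>"
  shows "(\<integral>\<^sup>+z. ennreal (gg c \<tau> j l z) \<partial>measure_pmf (aug_period x (c, R0))) \<le> ennreal (Bc / sqrt \<tau>)"
proof -
  have st: "0 < sqrt \<tau>" using t1 by simp
  have s1: "1 \<le> sqrt \<tau>" using t1 by simp
  have sqt: "sqrt \<tau> \<le> \<tau>"
  proof -
    have "sqrt \<tau> * 1 \<le> sqrt \<tau> * sqrt \<tau>" using s1 st by (intro mult_left_mono) auto
    thus ?thesis using t1 by simp
  qed
  have Bc0: "(Lam + Lam^2) / 2 \<ge> 0" using Lam_pos by simp
  show ?thesis
  proof (cases "A l j = 0")
    case True
    thus ?thesis unfolding gg_def by simp
  next
    case Anz: False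
    hence Apos: "0 < A l j" using A_nn[of l j] by simp
    have Axj: "A l j * x j \<le> c l / \<tau>"
    proof -
      have "A l j * x j \<le> (\<Sum>j\<in>UNIV. A l j * x j)"
        using A_nn x0 by (intro member_le_sum) (auto intro: mult_nonneg_nonneg)
      thus ?thesis using feas[of l] by linarith
    qed
    show ?thesis
    proof (cases "2 * A l j \<le> c l")
      case True
      have cpos: "0 < c l" using True Apos by simp
      have "(\<integral>\<^sup>+z. ennreal (gg c \<tau> j l z) \<partial>measure_pmf (aug_period x (c, R0)))
          = (\<integral>\<^sup>+z. ennreal ((1 / (2 * sqrt \<tau>)) * real (snd z) ^ 2 + (sqrt \<tau> / c l) * Z (snd (fst z)) l) \<partial>measure_pmf (aug_period x (c, R0)))"
        unfolding gg_def using Anz True by simp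
      also have "\<dots> = ennreal (1 / (2 * sqrt \<tau>)) * ennreal (Lam + Lam^2) + ennreal (sqrt \<tau> / c l) * ennreal (\<Sum>j\<in>UNIV. A l j * x j)"
      proof -
        have h1: "0 \<le> 1 / (2 * sqrt \<tau>)" using st by simp
        have h2: "0 \<le> sqrt \<tau> / c l" using st cpos by simp
        have zn: "\<And>z. z \<in> set_pmf (aug_period x (c, R0)) \<Longrightarrow> 0 \<le> Z (snd (fst z)) l"
          by (auto dest!: nnn_period simp: nnn_def intro!: Z_nonneg)
        have "(\<integral>\<^sup>+z. ennreal ((1 / (2 * sqrt \<tau>)) * real (snd z) ^ 2 + (sqrt \<tau> / c l) * Z (snd (fst z)) l) \<partial>measure_pmf (aug_period x (c, R0)))
          = (\<integral>\<^sup>+z. ennreal ((1 / (2 * sqrt \<tau>)) * real (snd z) ^ 2) \<partial>measure_pmf (aug_period x (c, R0)))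
          + (\<integral>\<^sup>+z. ennreal ((sqrt \<tau> / c l) * Z (snd (fst z)) l) \<partial>measure_pmf (aug_period x (c, R0)))"
          by (rule pmf_int_add) (use h1 in simp, rule mult_nonneg_nonneg[OF h2 zn])
        also have "\<dots> = ennreal (1 / (2 * sqrt \<tau>)) * ennreal (Lam + Lam^2) + ennreal (sqrt \<tau> / c l) * ennreal (\<Sum>j\<in>UNIV. A l j * x j)"
          by (simp only: pmf_int_cmult[OF h1] pmf_int_cmult[OF h2] EK2 EZ[OF x0 xl])
        finally show ?thesis .
      qed
      also have "\<dots> = ennreal ((Lam + Lam^2) / (2 * sqrt \<tau>) + sqrt \<tau> / c l * (\<Sum>j\<in>UNIV. A l j * x j))"
        using st cpos Lam_pos A_nn x0
        by (simp add: ennreal_mult'[symmetric] ennreal_plus[symmetric] sum_nonneg mult_nonneg_nonneg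
                 add_nonneg_nonneg del: ennreal_plus)
      also have "\<dots> \<le> ennreal (Bc / sqrt \<tau>)"
      proof (rule ennreal_leI)
        have "sqrt \<tau> / c l * (\<Sum>j\<in>UNIV. A l j * x j) \<le> sqrt \<tau> / c l * (c l / \<tau>)"
          using feas[of l] st cpos by (intro mult_left_mono) auto
        also have "\<dots> = 1 / sqrt \<tau>"
          using cpos t1 by (simp add: field_simps)
        finally have "sqrt \<tau> / c l * (\<Sum>j\<in>UNIV. A l j * x j) \<le> 1 / sqrt \<tau>" .
        moreover have "(Lam + Lam^2) / (2 * sqrt \<tau>) = ((Lam + Lam^2) / 2) / sqrt \<tau>" by simp
        moreover have "Bc / sqrt \<tau> = ((Lam + Lam^2) / 2) / sqrt \<tau> + 2 / sqrt \<tau>"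
          unfolding Bc_def by (simp add: add_divide_distrib)
        moreover have "1 / sqrt \<tau> \<le> 2 / sqrt \<tau>" using st by (simp add: divide_right_mono)
        ultimately show "(Lam + Lam^2) / (2 * sqrt \<tau>) + sqrt \<tau> / c l * (\<Sum>j\<in>UNIV. A l j * x j) \<le> Bc / sqrt \<tau>"
          by linarith
      qed
      finally show ?thesis .
    next
      case False
      have "(\<integral>\<^sup>+z. ennreal (gg c \<tau> j l z) \<partial>measure_pmf (aug_period x (c, R0)))
          = (\<integral>\<^sup>+z. ennreal (snd (fst z) j) \<partial>measure_pmf (aug_period x (c, R0)))"
        unfolding gg_def using Anz False by simp
      also have "\<dots> = ennreal (x j)" by (rule mom_n_period[OF x0 xl])
      also have "\<dots> \<le> ennreal (Bc / sqrt \<tau>)"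
      proof (rule ennreal_leI)
        have "c l / \<tau> \<le> 2 * A l j / \<tau>" using False t1 by (intro divide_right_mono) auto
        hence "A l j * x j \<le> 2 * A l j / \<tau>" using Axj by linarith
        hence "x j \<le> 2 / \<tau>" using Apos t1 by (simp add: field_simps)
        also have "\<dots> \<le> 2 / sqrt \<tau>" using sqt st by (simp add: frac_le)
        also have "\<dots> \<le> Bc / sqrt \<tau>" using Bc0 st unfolding Bc_def by (simp add: divide_right_mono)
        finally show "x j \<le> Bc / sqrt \<tau>" .
      qed
      finally show ?thesis .
    qed
  qed
qed

lemma EL:
  assumes R: "0 \<le> R0" and x0: "\<And>i. 0 \<le> x i" and xl: "\<And>i. x i \<le> lam i"
  shows "(\<integral>\<^sup>+z. ennreal (R0 + (\<Sum>j\<in>UNIV. r j * snd (fst z) j)) \<partial>measure_pmf (aug_period x s))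
       = ennreal (R0 + (\<Sum>j\<in>UNIV. r j * x j))"
proof -
  have nz: "\<And>z j. z \<in> set_pmf (aug_period x s) \<Longrightarrow> 0 \<le> snd (fst z) j"
    by (auto dest!: nnn_period simp: nnn_def)
  have "(\<integral>\<^sup>+z. ennreal (R0 + (\<Sum>j\<in>UNIV. r j * snd (fst z) j)) \<partial>measure_pmf (aug_period x s))
      = (\<integral>\<^sup>+z. ennreal R0 \<partial>measure_pmf (aug_period x s)) + (\<integral>\<^sup>+z. ennreal (\<Sum>j\<in>UNIV. r j * snd (fst z) j) \<partial>measure_pmf (aug_period x s))"
    by (rule pmf_int_add) (use R nz in \<open>auto intro!: sum_nonneg mult_nonneg_nonneg r_nn\<close>)
  also have "(\<integral>\<^sup>+z. ennreal (\<Sum>j\<in>UNIV. r j * snd (fst z) j) \<partial>measure_pmf (aug_period x s))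
      = (\<Sum>j\<in>UNIV. \<integral>\<^sup>+z. ennreal (r j * snd (fst z) j) \<partial>measure_pmf (aug_period x s))"
    by (rule pmf_int_sum) (use nz in \<open>auto intro!: mult_nonneg_nonneg r_nn\<close>)
  also have "\<dots> = (\<Sum>j\<in>UNIV. ennreal (r j * x j))"
  proof (intro sum.cong refl)
    fix j
    show "(\<integral>\<^sup>+z. ennreal (r j * snd (fst z) j) \<partial>measure_pmf (aug_period x s)) = ennreal (r j * x j)"
      using pmf_int_cmult[OF r_nn[of j], where f="\<lambda>z. snd (fst z) j" and M="aug_period x s"] mom_n_period[OF x0 xl, where j=j and s=s] r_nn[of j]
      by (simp add: ennreal_mult')
  qed
  also have "\<dots> = ennreal (\<Sum>j\<in>UNIV. r j * x j)"
    using r_nn x0 by (intro sum_ennreal) (auto intro: mult_nonneg_nonneg)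
  finally show ?thesis using R x0 r_nn
    by (simp add: ennreal_plus[symmetric] sum_nonneg mult_nonneg_nonneg del: ennreal_plus)
qed

lemma revenue_upper:
  assumes c0: "\<And>l. 0 \<le> c l" and R: "0 \<le> R0" and x0: "\<And>i. 0 \<le> x i" and xl: "\<And>i. x i \<le> lam i"
  shows "(\<integral>\<^sup>+z. ennreal (snd (fst (fst z))) \<partial>measure_pmf (aug_period x (c, R0))) \<le> ennreal (R0 + (\<Sum>j\<in>UNIV. r j * x j))"
proof -
  have "(\<integral>\<^sup>+z. ennreal (snd (fst (fst z))) \<partial>measure_pmf (aug_period x (c, R0)))
      \<le> (\<integral>\<^sup>+z. ennreal (R0 + (\<Sum>j\<in>UNIV. r j * snd (fst z) j)) \<partial>measure_pmf (aug_period x (c, R0)))"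
    by (rule pmf_int_mono) (auto dest!: sinv_period[OF c0] simp: sinv_def Let_def)
  thus ?thesis using EL[OF R x0 xl] by simp
qed

lemma revenue_lower:
  assumes c0: "\<And>l. 0 \<le> c l" and R: "0 \<le> R0" and t1: "1 \<le> \<tau>" and x0: "\<And>i. 0 \<le> x i" and xl: "\<And>i. x i \<le> lam i"
    and feas: "\<And>l. (\<Sum>j\<in>UNIV. A l j * x j) \<le> c l / \<tau>"
  shows "ennreal (R0 + (\<Sum>j\<in>UNIV. r j * x j)) \<le>
    (\<integral>\<^sup>+z. ennreal (snd (fst (fst z))) \<partial>measure_pmf (aug_period x (c, R0))) + ennreal ((\<Sum>j\<in>UNIV. r j) * real CARD('m) * Bc / sqrt \<tau>)"
proof -
  let ?M = "aug_period x (c, R0)"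
  have sv: "\<And>z. z \<in> set_pmf ?M \<Longrightarrow> sinv c R0 z" by (rule sinv_period[OF c0])
  have "ennreal (R0 + (\<Sum>j\<in>UNIV. r j * x j)) = (\<integral>\<^sup>+z. ennreal (R0 + (\<Sum>j\<in>UNIV. r j * snd (fst z) j)) \<partial>measure_pmf ?M)"
    using EL[OF R x0 xl] by simp
  also have "\<dots> \<le> (\<integral>\<^sup>+z. ennreal (snd (fst (fst z)) + (\<Sum>j\<in>UNIV. \<Sum>l\<in>UNIV. r j * gg c \<tau> j l z)) \<partial>measure_pmf ?M)"
    by (rule pmf_int_mono) (rule gg_pointwise[OF t1 sv])
  also have "\<dots> = (\<integral>\<^sup>+z. ennreal (snd (fst (fst z))) \<partial>measure_pmf ?M) + (\<Sum>j\<in>UNIV. \<Sum>l\<in>UNIV. ennreal (r j) * (\<integral>\<^sup>+z. ennreal (gg c \<tau> j l z) \<partial>measure_pmf ?M))"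
  proof -
    have gn: "\<And>z j l. z \<in> set_pmf ?M \<Longrightarrow> 0 \<le> gg c \<tau> j l z" by (rule gg_nonneg[OF t1 sv])
    have "(\<integral>\<^sup>+z. ennreal (snd (fst (fst z)) + (\<Sum>j\<in>UNIV. \<Sum>l\<in>UNIV. r j * gg c \<tau> j l z)) \<partial>measure_pmf ?M)
      = (\<integral>\<^sup>+z. ennreal (snd (fst (fst z))) \<partial>measure_pmf ?M) + (\<integral>\<^sup>+z. ennreal (\<Sum>j\<in>UNIV. \<Sum>l\<in>UNIV. r j * gg c \<tau> j l z) \<partial>measure_pmf ?M)"
      by (rule pmf_int_add) (use sinv_snd_nonneg[OF sv R] gn in \<open>auto intro!: sum_nonneg mult_nonneg_nonneg r_nn\<close>)
    also have "(\<integral>\<^sup>+z. ennreal (\<Sum>j\<in>UNIV. \<Sum>l\<in>UNIV. r j * gg c \<tau> j l z) \<partial>measure_pmf ?M)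
      = (\<Sum>j\<in>UNIV. \<integral>\<^sup>+z. ennreal (\<Sum>l\<in>UNIV. r j * gg c \<tau> j l z) \<partial>measure_pmf ?M)"
      by (rule pmf_int_sum) (use gn in \<open>auto intro!: sum_nonneg mult_nonneg_nonneg r_nn\<close>)
    also have "\<dots> = (\<Sum>j\<in>UNIV. \<Sum>l\<in>UNIV. \<integral>\<^sup>+z. ennreal (r j * gg c \<tau> j l z) \<partial>measure_pmf ?M)"
      by (intro sum.cong refl pmf_int_sum) (use gn in \<open>auto intro!: mult_nonneg_nonneg r_nn\<close>)
    also have "\<dots> = (\<Sum>j\<in>UNIV. \<Sum>l\<in>UNIV. ennreal (r j) * (\<integral>\<^sup>+z. ennreal (gg c \<tau> j l z) \<partial>measure_pmf ?M))"
      by (intro sum.cong refl pmf_int_cmult r_nn)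
    finally show ?thesis .
  qed
  also have "\<dots> \<le> (\<integral>\<^sup>+z. ennreal (snd (fst (fst z))) \<partial>measure_pmf ?M) + (\<Sum>j\<in>UNIV. \<Sum>l\<in>(UNIV::'m set). ennreal (r j) * ennreal (Bc / sqrt \<tau>))"
    by (intro add_left_mono sum_mono mult_left_mono gg_int[OF c0 t1 x0 xl feas]) auto
  also have "(\<Sum>j\<in>UNIV. \<Sum>l\<in>(UNIV::'m set). ennreal (r j) * ennreal (Bc / sqrt \<tau>)) = ennreal ((\<Sum>j\<in>UNIV. r j) * real CARD('m) * Bc / sqrt \<tau>)"
  proof -
    have B0: "0 \<le> Bc / sqrt \<tau>" unfolding Bc_def using Lam_pos t1 by simp
    have "(\<Sum>j\<in>UNIV. \<Sum>l\<in>(UNIV::'m set). ennreal (r j) * ennreal (Bc / sqrt \<tau>)) = (\<Sum>j\<in>UNIV. \<Sum>l\<in>(UNIV::'m set). ennreal (r j * (Bc / sqrt \<tau>)))"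
      by (intro sum.cong refl, subst ennreal_mult) (use r_nn B0 in auto)
    also have "\<dots> = (\<Sum>j\<in>UNIV. ennreal (\<Sum>l\<in>(UNIV::'m set). r j * (Bc / sqrt \<tau>)))"
      by (intro sum.cong refl sum_ennreal) (rule mult_nonneg_nonneg[OF r_nn B0])
    also have "\<dots> = ennreal (\<Sum>j\<in>UNIV. \<Sum>l\<in>(UNIV::'m set). r j * (Bc / sqrt \<tau>))"
      by (intro sum_ennreal sum_nonneg) (rule mult_nonneg_nonneg[OF r_nn B0])
    also have "(\<Sum>j\<in>UNIV. \<Sum>l\<in>(UNIV::'m set). r j * (Bc / sqrt \<tau>)) = (\<Sum>j\<in>UNIV. r j) * real CARD('m) * Bc / sqrt \<tau>"
    proof -
      define K where "K = Bc / sqrt \<tau>"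
      have "(\<Sum>j\<in>UNIV. \<Sum>l\<in>(UNIV::'m set). r j * K) = (\<Sum>j\<in>UNIV. r j * (K * real CARD('m)))"
        by (simp add: mult_ac)
      also have "\<dots> = (\<Sum>j\<in>UNIV. r j) * (K * real CARD('m))" by (rule sum_distrib_right[symmetric])
      finally show ?thesis unfolding K_def by (simp add: mult_ac)
    qed
    finally show ?thesis .
  qed
  finally show ?thesis .
qed

end


lemma fq: fixes \<beta> b y \<xi> :: real assumes "b + \<xi> \<le> y"
  shows "(max 0 (\<beta> - y))^2 \<le> (max 0 (\<beta> - b))^2 - 2 * max 0 (\<beta> - b) * \<xi> + \<xi>^2"
proof (cases "\<beta> - y \<le> 0")
  case True
  hence "(max 0 (\<beta> - y))^2 = 0" by simp
  moreover have "0 \<le> (max 0 (\<beta> - b) - \<xi>)^2" by simp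
  moreover have "(max 0 (\<beta> - b) - \<xi>)^2 = (max 0 (\<beta> - b))^2 - 2 * max 0 (\<beta> - b) * \<xi> + \<xi>^2"
    by (simp add: power2_diff)
  ultimately show ?thesis by linarith
next
  case False
  hence p: "0 < \<beta> - y" by simp
  show ?thesis
  proof (cases "0 \<le> \<beta> - b")
    case True
    have "(\<beta> - y)^2 \<le> (\<beta> - b - \<xi>)^2" using p assms by (intro power_mono) auto
    thus ?thesis using True p by (simp add: power2_diff max_def)
  next
    case False
    have "(\<beta> - y)^2 \<le> (- \<xi>)^2" using p assms False by (intro power_mono) auto
    thus ?thesis using False p by (simp add: max_def)
  qed
qed

context nrm begin

definition Asum :: real where "Asum = (\<Sum>l\<in>UNIV. \<Sum>j\<in>UNIV. A l j)"
definition KQ :: real where "KQ = 2 * (Asum * Lam)^2 + 2 * Asum^2 * (Lam + Lam^2)"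

lemma A_le_Asum: "A l j \<le> Asum"
proof -
  have "A l j \<le> (\<Sum>j\<in>UNIV. A l j)" by (rule member_le_sum) (auto simp: A_nn)
  also have "\<dots> \<le> Asum" unfolding Asum_def by (rule member_le_sum) (auto intro: sum_nonneg A_nn)
  finally show ?thesis .
qed

lemma Asum_nonneg: "0 \<le> Asum" unfolding Asum_def by (intro sum_nonneg) (auto simp: A_nn)

lemma Z_le: assumes "sinv c R0 z" shows "Z (snd (fst z)) l \<le> Asum * real (snd z)"
proof -
  have n0: "\<And>j. 0 \<le> snd (fst z) j" and sk: "(\<Sum>j\<in>UNIV. snd (fst z) j) \<le> real (snd z)"
    using assms by (auto simp: sinv_def Let_def)
  have "Z (snd (fst z)) l \<le> (\<Sum>j\<in>UNIV. Asum * snd (fst z) j)"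
    unfolding Z_def by (intro sum_mono mult_right_mono A_le_Asum n0)
  also have "\<dots> = Asum * (\<Sum>j\<in>UNIV. snd (fst z) j)" by (simp add: sum_distrib_left)
  also have "\<dots> \<le> Asum * real (snd z)" using sk Asum_nonneg by (intro mult_left_mono)
  finally show ?thesis .
qed

lemma a_le: assumes "\<And>i. 0 \<le> x i" "\<And>i. x i \<le> lam i" shows "(\<Sum>j\<in>UNIV. A l j * x j) \<le> Asum * Lam"
proof -
  have "(\<Sum>j\<in>UNIV. A l j * x j) \<le> (\<Sum>j\<in>UNIV. Asum * lam j)"
    using assms by (intro sum_mono mult_mono A_le_Asum) (auto simp: Asum_nonneg)
  thus ?thesis by (simp add: sum_distrib_left Lam_def)
qed

lemma Q_pointwise:
  assumes I: "sinv c R0 z" and t2: "2 \<le> \<tau>" and feas: "a \<le> c l / \<tau>"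
  shows "(max 0 (\<beta> - fst (fst (fst z)) l / (\<tau> - 1)))^2 + 2 * max 0 (\<beta> - c l / \<tau>) * a / (\<tau> - 1)
    \<le> ((max 0 (\<beta> - c l / \<tau>))^2 + 2 * a^2 / (\<tau> - 1)^2) + (2 * max 0 (\<beta> - c l / \<tau>) / (\<tau> - 1)) * Z (snd (fst z)) l
       + (2 * Asum^2 / (\<tau> - 1)^2) * real (snd z) ^ 2"
proof -
  define e where "e = \<tau> - 1"
  have e0: "0 < e" using t2 by (simp add: e_def)
  define b where "b = c l / \<tau>"
  define Zl where "Zl = Z (snd (fst z)) l"
  define k where "k = real (snd z)"
  define d where "d = max 0 (\<beta> - b)"
  define \<xi> where "\<xi> = (a - Zl) / e"
  have cz: "c l - Zl \<le> fst (fst (fst z)) l" and n0: "\<And>j. 0 \<le> snd (fst z) j"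
    using I by (auto simp: sinv_def Let_def Zl_def)
  have Z0: "0 \<le> Zl" unfolding Zl_def by (rule Z_nonneg[OF n0])
  have Zk: "Zl \<le> Asum * k" unfolding Zl_def k_def by (rule Z_le[OF I])
  have cl: "c l = b * (e + 1)" using t2 by (simp add: b_def e_def)
  have "b + \<xi> \<le> (c l - Zl) / e"
  proof -
    have "(c l - Zl) / e = b + (b - Zl) / e" using e0 cl by (simp add: field_simps)
    moreover have "(a - Zl) / e \<le> (b - Zl) / e" using feas e0 by (intro divide_right_mono) (auto simp: b_def)
    ultimately show ?thesis by (simp add: \<xi>_def)
  qed
  also have "\<dots> \<le> fst (fst (fst z)) l / e" using cz e0 by (intro divide_right_mono) auto
  finally have y: "b + \<xi> \<le> fst (fst (fst z)) l / e" .
  have f1: "(max 0 (\<beta> - fst (fst (fst z)) l / e))^2 \<le> d^2 - 2 * d * \<xi> + \<xi>^2"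
    unfolding d_def by (rule fq[OF y])
  have d0: "0 \<le> d" by (simp add: d_def)
  have "- 2 * d * \<xi> = 2 * d / e * Zl - 2 * d * a / e" using e0 by (simp add: \<xi>_def field_simps)
  moreover have "\<xi>^2 \<le> 2 * a^2 / e^2 + 2 * Asum^2 / e^2 * k^2"
  proof -
    have xe: "\<xi>^2 = (a - Zl)^2 / e^2" by (simp add: \<xi>_def power_divide)
    have "(a - Zl)^2 \<le> 2 * a^2 + 2 * Zl^2"
    proof -
      have "(a - Zl)^2 = 2 * a^2 + 2 * Zl^2 - (a + Zl)^2" by (simp add: power2_eq_square algebra_simps)
      thus ?thesis using zero_le_power2[of "a + Zl"] by linarith
    qed
    also have "Zl^2 \<le> (Asum * k)^2" using Z0 Zk by (intro power_mono) auto
    finally have "(a - Zl)^2 \<le> 2 * a^2 + 2 * Asum^2 * k^2" by (simp add: power_mult_distrib)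
    hence "(a - Zl)^2 / e^2 \<le> (2 * a^2 + 2 * Asum^2 * k^2) / e^2" using e0 by (intro divide_right_mono) auto
    also have "\<dots> = 2 * a^2 / e^2 + 2 * Asum^2 / e^2 * k^2" by (simp add: add_divide_distrib)
    finally show ?thesis by (simp add: xe)
  qed
  ultimately have "(max 0 (\<beta> - fst (fst (fst z)) l / e))^2 + 2 * d * a / e \<le> (d^2 + 2 * a^2 / e^2) + 2 * d / e * Zl + 2 * Asum^2 / e^2 * k^2"
    using f1 by linarith
  thus ?thesis by (simp add: e_def d_def b_def Zl_def k_def)
qed

lemma Q_step:
  assumes c0: "\<And>l. 0 \<le> c l" and t2: "2 \<le> \<tau>" and x0: "\<And>i. 0 \<le> x i" and xl: "\<And>i. x i \<le> lam i"
    and feas: "\<And>l. (\<Sum>j\<in>UNIV. A l j * x j) \<le> c l / \<tau>"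
  shows "(\<integral>\<^sup>+z. ennreal ((max 0 (\<beta> - fst (fst (fst z)) l / (\<tau> - 1)))^2) \<partial>measure_pmf (aug_period x (c, R0)))
    \<le> ennreal ((max 0 (\<beta> - c l / \<tau>))^2 + KQ / (\<tau> - 1)^2)"
proof -
  let ?M = "aug_period x (c, R0)"
  define a where "a = (\<Sum>j\<in>UNIV. A l j * x j)"
  define d where "d = max 0 (\<beta> - c l / \<tau>)"
  define e where "e = \<tau> - 1"
  have e0: "0 < e" using t2 by (simp add: e_def)
  have a0: "0 \<le> a" unfolding a_def using A_nn x0 by (intro sum_nonneg mult_nonneg_nonneg) auto
  have aA: "a \<le> Asum * Lam" unfolding a_def by (rule a_le[OF x0 xl])
  have d0: "0 \<le> d" by (simp add: d_def)
  define w where "w = 2 * d * a / e"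
  have w0: "0 \<le> w" using d0 a0 e0 by (simp add: w_def)
  define C0 where "C0 = d^2 + 2 * a^2 / e^2"
  have C00: "0 \<le> C0" using e0 by (simp add: C0_def)
  define dd where "dd = 2 * d / e"
  have dd0: "0 \<le> dd" using d0 e0 by (simp add: dd_def)
  define q where "q = 2 * Asum^2 / e^2"
  have q0: "0 \<le> q" using e0 by (simp add: q_def)
  have sv: "\<And>z. z \<in> set_pmf ?M \<Longrightarrow> sinv c R0 z" by (rule sinv_period[OF c0])
  have zn: "\<And>z. z \<in> set_pmf ?M \<Longrightarrow> 0 \<le> Z (snd (fst z)) l"
    by (auto dest!: nnn_period simp: nnn_def intro!: Z_nonneg)
  let ?f = "\<lambda>z. (max 0 (\<beta> - fst (fst (fst z)) l / (\<tau> - 1)))^2"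
  have "(\<integral>\<^sup>+z. ennreal (?f z) \<partial>measure_pmf ?M) + ennreal w = (\<integral>\<^sup>+z. ennreal (?f z + w) \<partial>measure_pmf ?M)"
    by (subst pmf_int_add) (use w0 in auto)
  also have "\<dots> \<le> (\<integral>\<^sup>+z. ennreal ((C0 + dd * Z (snd (fst z)) l) + q * real (snd z) ^ 2) \<partial>measure_pmf ?M)"
  proof (rule pmf_int_mono)
    fix z assume "z \<in> set_pmf ?M"
    from Q_pointwise[OF sv[OF this] t2, of a l \<beta>] feas[of l]
    show "?f z + w \<le> (C0 + dd * Z (snd (fst z)) l) + q * real (snd z) ^ 2"
      by (simp add: a_def w_def C0_def dd_def q_def d_def e_def)
  qed
  also have "\<dots> = (\<integral>\<^sup>+z. ennreal (C0 + dd * Z (snd (fst z)) l) \<partial>measure_pmf ?M) + (\<integral>\<^sup>+z. ennreal (q * real (snd z) ^ 2) \<partial>measure_pmf ?M)"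
    by (rule pmf_int_add) (use C00 dd0 q0 zn in auto)
  also have "(\<integral>\<^sup>+z. ennreal (C0 + dd * Z (snd (fst z)) l) \<partial>measure_pmf ?M) = ennreal C0 + ennreal dd * ennreal a"
  proof -
    have "(\<integral>\<^sup>+z. ennreal (C0 + dd * Z (snd (fst z)) l) \<partial>measure_pmf ?M) = (\<integral>\<^sup>+z. ennreal C0 \<partial>measure_pmf ?M) + (\<integral>\<^sup>+z. ennreal (dd * Z (snd (fst z)) l) \<partial>measure_pmf ?M)"
      by (rule pmf_int_add) (use C00 dd0 zn in auto)
    also have "(\<integral>\<^sup>+z. ennreal (dd * Z (snd (fst z)) l) \<partial>measure_pmf ?M) = ennreal dd * ennreal a"
      by (simp only: pmf_int_cmult[OF dd0] EZ[OF x0 xl] a_def)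
    finally show ?thesis by simp
  qed
  also have "(\<integral>\<^sup>+z. ennreal (q * real (snd z) ^ 2) \<partial>measure_pmf ?M) = ennreal q * ennreal (Lam + Lam^2)"
    by (simp only: pmf_int_cmult[OF q0] EK2)
  also have "ennreal C0 + ennreal dd * ennreal a + ennreal q * ennreal (Lam + Lam^2) = ennreal w + ennreal (C0 + q * (Lam + Lam^2))"
  proof -
    have "dd * a = w" by (simp add: dd_def w_def)
    thus ?thesis using C00 dd0 a0 q0 Lam_pos
      by (simp add: ennreal_mult'[symmetric] ennreal_plus[symmetric] add_ac del: ennreal_plus)
  qed
  finally have "(\<integral>\<^sup>+z. ennreal (?f z) \<partial>measure_pmf ?M) \<le> ennreal (C0 + q * (Lam + Lam^2))"
    by (simp add: add.commute[of _ "ennreal w"] ennreal_add_left_cancel_le)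
  also have "ennreal (C0 + q * (Lam + Lam^2)) \<le> ennreal (d^2 + KQ / e^2)"
  proof (rule ennreal_leI)
    have "a^2 \<le> (Asum * Lam)^2" using a0 aA by (intro power_mono) auto
    hence "2 * a^2 / e^2 \<le> 2 * (Asum * Lam)^2 / e^2" using e0 by (intro divide_right_mono) auto
    moreover have "KQ / e^2 = 2 * (Asum * Lam)^2 / e^2 + q * (Lam + Lam^2)"
      using e0 unfolding KQ_def q_def by (simp add: field_simps)
    ultimately show "C0 + q * (Lam + Lam^2) \<le> d^2 + KQ / e^2" unfolding C0_def by linarith
  qed
  finally show ?thesis by (simp add: d_def e_def)
qed

end


lemma prod_01: "finite S \<Longrightarrow> (\<And>i. i \<in> S \<Longrightarrow> 0 \<le> f i \<and> f i \<le> (1::real)) \<Longrightarrow> 0 \<le> prod f S \<and> prod f S \<le> 1"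
  by (induction S rule: finite_induct) (auto intro: mult_le_one)

lemma one_minus_prod: "finite S \<Longrightarrow> (\<And>i. i \<in> S \<Longrightarrow> 0 \<le> f i \<and> f i \<le> (1::real)) \<Longrightarrow> 1 - prod f S \<le> (\<Sum>i\<in>S. 1 - f i)"
proof (induction S rule: finite_induct)
  case empty then show ?case by simp
next
  case (insert a S)
  have P: "0 \<le> prod f S \<and> prod f S \<le> 1" using prod_01[OF insert(1)] insert(4) by auto
  have fa: "0 \<le> f a" "f a \<le> 1" using insert(4) by auto
  have "0 \<le> (1 - f a) * (1 - prod f S)" using P fa by simp
  hence "1 - f a * prod f S \<le> (1 - f a) + (1 - prod f S)" by (simp add: algebra_simps)
  thus ?case using insert by simp
qed

lemma prod_le_member: "finite S \<Longrightarrow> l \<in> S \<Longrightarrow> (\<And>i. i \<in> S \<Longrightarrow> 0 \<le> f i \<and> f i \<le> (1::real)) \<Longrightarrow> prod f S \<le> f l"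
proof -
  assume S: "finite S" "l \<in> S" and f: "\<And>i. i \<in> S \<Longrightarrow> 0 \<le> f i \<and> f i \<le> (1::real)"
  have "prod f S = f l * prod f (S - {l})" using S by (simp add: prod.remove)
  moreover have "prod f (S - {l}) \<le> 1" "0 \<le> f l" using prod_01[of "S - {l}" f] S f by auto
  ultimately show ?thesis by (simp add: mult_left_le)
qed

context nrm begin

lemma lp_value_opt: "lp_optimal lam r A b x \<Longrightarrow> lp_value lam r A b = (\<Sum>j\<in>UNIV. r j * x j)"
  unfolding lp_value_def lp_optimal_def
  by (rule cSup_eq_maximum) auto

definition Kc :: real where "Kc = (\<Sum>j\<in>UNIV. \<Sum>l\<in>UNIV. if 0 < A l j then r j / A l j else 0)"

lemma Kc_nonneg: "0 \<le> Kc" unfolding Kc_def by (intro sum_nonneg) (auto simp: r_nn)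

lemma lp_lipschitz:
  assumes b0: "\<And>l. 0 \<le> b l" and b'0: "\<And>l. 0 \<le> b' l"
    and ox: "lp_optimal lam r A b x" and oy: "lp_optimal lam r A b' x'"
  shows "(\<Sum>j\<in>UNIV. r j * x j) \<le> (\<Sum>j\<in>UNIV. r j * x' j) + Kc * (\<Sum>l\<in>UNIV. max 0 (b l - b' l))"
proof -
  have fx: "lp_feasible lam A b x" using ox by (simp add: lp_optimal_def)
  have x0: "\<And>j. 0 \<le> x j" and xl: "\<And>j. x j \<le> lam j" and xb: "\<And>l. (\<Sum>j\<in>UNIV. A l j * x j) \<le> b l"
    using fx by (auto simp: lp_feasible_def)
  define \<theta> where "\<theta> l = (if b l = 0 then 1 else min 1 (b' l / b l))" for l
  have th: "0 \<le> \<theta> l \<and> \<theta> l \<le> 1" for l using b0[of l] b'0[of l] by (auto simp: \<theta>_def)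
  define fj where "fj j l = (if 0 < A l j then \<theta> l else 1)" for j l
  have fj01: "0 \<le> fj j l \<and> fj j l \<le> 1" for j l using th by (auto simp: fj_def)
  define y where "y j = x j * prod (fj j) UNIV" for j
  have P01: "0 \<le> prod (fj j) UNIV \<and> prod (fj j) UNIV \<le> 1" for j using prod_01[of UNIV "fj j"] fj01 by auto
  have y0: "0 \<le> y j" for j using x0[of j] P01[of j] by (simp add: y_def)
  have yx: "y j \<le> x j" for j using x0[of j] P01[of j] by (simp add: y_def mult_left_le)
  have thb: "\<theta> l * b l \<le> b' l" for l
    using b0[of l] b'0[of l] by (auto simp: \<theta>_def min_def field_simps)
  have fy: "lp_feasible lam A b' y"
    unfolding lp_feasible_def
  proof (intro conjI allI)
    fix l
    have "(\<Sum>j\<in>UNIV. A l j * y j) \<le> (\<Sum>j\<in>UNIV. \<theta> l * (A l j * x j))"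
    proof (rule sum_mono)
      fix j
      show "A l j * y j \<le> \<theta> l * (A l j * x j)"
      proof (cases "0 < A l j")
        case True
        have "prod (fj j) UNIV \<le> fj j l" by (rule prod_le_member) (auto simp: fj01)
        hence "prod (fj j) UNIV \<le> \<theta> l" using True by (simp add: fj_def)
        hence "x j * prod (fj j) UNIV \<le> x j * \<theta> l" using x0[of j] by (rule mult_left_mono)
        hence "A l j * (x j * prod (fj j) UNIV) \<le> A l j * (x j * \<theta> l)" using A_nn[of l j] by (rule mult_left_mono)
        thus ?thesis by (simp add: y_def mult_ac)
      next
        case False
        hence "A l j = 0" using A_nn[of l j] by simp
        thus ?thesis by simp
      qed
    qed
    also have "\<dots> = \<theta> l * (\<Sum>j\<in>UNIV. A l j * x j)" by (simp add: sum_distrib_left)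
    also have "\<dots> \<le> \<theta> l * b l" using th[of l] xb[of l] by (intro mult_left_mono) auto
    also have "\<dots> \<le> b' l" by (rule thb)
    finally show "(\<Sum>j\<in>UNIV. A l j * y j) \<le> b' l" .
  next
    fix j show "0 \<le> y j" by (rule y0)
    show "y j \<le> lam j" using yx[of j] xl[of j] by simp
  qed
  have ry: "(\<Sum>j\<in>UNIV. r j * y j) \<le> (\<Sum>j\<in>UNIV. r j * x' j)"
    using oy fy by (simp add: lp_optimal_def)
  define D where "D l = max 0 (b l - b' l)" for l
  have D0: "0 \<le> D l" for l by (simp add: D_def)
  have key: "x j * (1 - fj j l) \<le> (if 0 < A l j then D l / A l j else 0)" for j l
  proof (cases "0 < A l j")
    case False thus ?thesis by (simp add: fj_def)
  next
    case True
    show ?thesis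
    proof (cases "b l = 0")
      case True
      thus ?thesis using \<open>0 < A l j\<close> D0[of l] by (simp add: fj_def \<theta>_def)
    next
      case False
      hence bp: "0 < b l" using b0[of l] by simp
      have Ax: "A l j * x j \<le> b l"
      proof -
        have "A l j * x j \<le> (\<Sum>j\<in>UNIV. A l j * x j)"
          using A_nn x0 by (intro member_le_sum) (auto intro: mult_nonneg_nonneg)
        thus ?thesis using xb[of l] by linarith
      qed
      hence xj: "x j \<le> b l / A l j" using \<open>0 < A l j\<close> by (simp add: field_simps)
      have om: "1 - \<theta> l = D l / b l" using bp by (auto simp: \<theta>_def D_def min_def max_def field_simps)
      have "x j * (1 - fj j l) = x j * (D l / b l)" using \<open>0 < A l j\<close> om by (simp add: fj_def)
      also have "\<dots> \<le> (b l / A l j) * (D l / b l)" using xj D0[of l] bp by (intro mult_right_mono) auto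
      also have "\<dots> = D l / A l j" using bp by simp
      finally show ?thesis using \<open>0 < A l j\<close> by simp
    qed
  qed
  have "(\<Sum>j\<in>UNIV. r j * x j) - (\<Sum>j\<in>UNIV. r j * y j) = (\<Sum>j\<in>UNIV. r j * (x j * (1 - prod (fj j) UNIV)))"
    by (simp add: y_def sum_subtractf[symmetric] algebra_simps)
  also have "\<dots> \<le> (\<Sum>j\<in>UNIV. r j * (\<Sum>l\<in>UNIV. x j * (1 - fj j l)))"
  proof (rule sum_mono)
    fix j
    have "1 - prod (fj j) UNIV \<le> (\<Sum>l\<in>UNIV. 1 - fj j l)" by (rule one_minus_prod) (auto simp: fj01)
    hence "x j * (1 - prod (fj j) UNIV) \<le> x j * (\<Sum>l\<in>UNIV. 1 - fj j l)" using x0[of j] by (rule mult_left_mono)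
    hence "r j * (x j * (1 - prod (fj j) UNIV)) \<le> r j * (x j * (\<Sum>l\<in>UNIV. 1 - fj j l))"
      using r_nn[of j] by (rule mult_left_mono)
    thus "r j * (x j * (1 - prod (fj j) UNIV)) \<le> r j * (\<Sum>l\<in>UNIV. x j * (1 - fj j l))"
      by (simp only: sum_distrib_left)
  qed
  also have "\<dots> \<le> (\<Sum>j\<in>UNIV. \<Sum>l\<in>UNIV. (if 0 < A l j then r j / A l j else 0) * (\<Sum>l'\<in>UNIV. D l'))"
  proof (rule sum_mono)
    fix j
    have "r j * (\<Sum>l\<in>UNIV. x j * (1 - fj j l)) = (\<Sum>l\<in>UNIV. r j * (x j * (1 - fj j l)))" by (simp add: sum_distrib_left)
    also have "\<dots> \<le> (\<Sum>l\<in>UNIV. (if 0 < A l j then r j / A l j else 0) * (\<Sum>l'\<in>UNIV. D l'))"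
    proof (rule sum_mono)
      fix l
      have "r j * (x j * (1 - fj j l)) \<le> r j * (if 0 < A l j then D l / A l j else 0)"
        using key[of j l] r_nn[of j] by (rule mult_left_mono)
      also have "\<dots> = (if 0 < A l j then r j / A l j else 0) * D l" by simp
      also have "\<dots> \<le> (if 0 < A l j then r j / A l j else 0) * (\<Sum>l'\<in>UNIV. D l')"
        using r_nn[of j] D0 by (intro mult_left_mono member_le_sum) auto
      finally show "r j * (x j * (1 - fj j l)) \<le> (if 0 < A l j then r j / A l j else 0) * (\<Sum>l'\<in>UNIV. D l')" .
    qed
    finally show "r j * (\<Sum>l\<in>UNIV. x j * (1 - fj j l)) \<le> (\<Sum>l\<in>UNIV. (if 0 < A l j then r j / A l j else 0) * (\<Sum>l'\<in>UNIV. D l'))" .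
  qed
  also have "\<dots> = Kc * (\<Sum>l\<in>UNIV. D l)" unfolding Kc_def by (simp add: sum_distrib_right)
  finally show ?thesis using ry by (simp add: D_def)
qed

end


lemma sqrt_sum_step:
  fixes a :: real assumes "1 \<le> a"
  shows "1 / sqrt a \<le> 2 * sqrt a - 2 * sqrt (a - 1)"
proof -
  have sa: "0 < sqrt a" using assms by simp
  have sb: "0 \<le> sqrt (a - 1)" using assms by simp
  have le: "sqrt (a - 1) \<le> sqrt a" by simp
  have prod1: "(sqrt a - sqrt (a - 1)) * (sqrt a + sqrt (a - 1)) = 1"
    using assms by (simp add: algebra_simps)
  have "1 = (sqrt a - sqrt (a - 1)) * (sqrt a + sqrt (a - 1))" using prod1 by simp
  also have "\<dots> \<le> (sqrt a - sqrt (a - 1)) * (2 * sqrt a)"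
    using le sb by (intro mult_left_mono) auto
  finally have "1 \<le> (sqrt a - sqrt (a - 1)) * (2 * sqrt a)" .
  thus ?thesis using sa by (simp add: field_simps)
qed

lemma sqrt_sum:
  fixes T t :: nat assumes "t \<le> T"
  shows "(\<Sum>i<t. 1 / sqrt (real (T - i))) \<le> 2 * sqrt (real T) - 2 * sqrt (real (T - t))"
  using assms
proof (induction t)
  case 0 then show ?case by simp
next
  case (Suc t)
  have a: "1 \<le> real (T - t)" using Suc.prems by simp
  have e: "real (T - Suc t) = real (T - t) - 1" using Suc.prems by simp
  have "(\<Sum>i<Suc t. 1 / sqrt (real (T - i))) = (\<Sum>i<t. 1 / sqrt (real (T - i))) + 1 / sqrt (real (T - t))" by simp
  also have "\<dots> \<le> (2 * sqrt (real T) - 2 * sqrt (real (T - t))) + (2 * sqrt (real (T - t)) - 2 * sqrt (real (T - t) - 1))"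
    using Suc.IH Suc.prems sqrt_sum_step[OF a] by (intro add_mono) auto
  finally show ?case by (simp add: e)
qed


context nrm begin

definition Kr where "Kr = (\<Sum>j\<in>UNIV. r j) * real CARD('m) * Bc"

lemma Kr_nonneg: "0 \<le> Kr"
  unfolding Kr_def Bc_def using r_nn Lam_pos by (auto intro!: mult_nonneg_nonneg sum_nonneg)

definition KQm where "KQm = real CARD('m) * KQ"

lemma KQ_nonneg: "0 \<le> KQ"
  unfolding KQ_def using Lam_pos Asum_nonneg by (auto intro!: add_nonneg_nonneg mult_nonneg_nonneg)

lemma KQm_nonneg: "0 \<le> KQm" unfolding KQm_def using KQ_nonneg by simp

definition Kp where "Kp = Kc * KQm + Kc * real CARD('m) / 2"

lemma Kp_nonneg: "0 \<le> Kp" unfolding Kp_def using Kc_nonneg KQm_nonneg by simp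

end

locale frctx = nrm lam r A for lam r :: "'n::finite \<Rightarrow> real" and A :: "'m::finite \<Rightarrow> 'n \<Rightarrow> real" +
  fixes sel :: "('m \<Rightarrow> real) \<Rightarrow> ('n \<Rightarrow> real)" and C :: "'m \<Rightarrow> real" and T :: nat
  assumes sel_opt: "\<And>b. (\<And>l. 0 \<le> b l) \<Longrightarrow> lp_optimal lam r A b (sel b)"
    and C0: "\<And>l. 0 \<le> C l" and Tpos: "0 < T"
begin

abbreviation run where "run t \<equiv> fr_run lam r A sel C T t"
definition bt where "bt t s = (\<lambda>l. fst s l / real (T - t))"
definition phi where "phi t s = (\<Sum>j\<in>UNIV. r j * sel (bt t s) j)"
definition b0 where "b0 = (\<lambda>l. C l / real T)"
definition phi0 where "phi0 = (\<Sum>j\<in>UNIV. r j * sel b0 j)"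
definition Qf where "Qf t s = (\<Sum>l\<in>UNIV. (max 0 (b0 l - fst s l / real (T - t)))^2)"

lemma period_aug: "period lam r A x s = map_pmf (\<lambda>y. fst (fst y)) (aug_period x s)"
  by (simp add: map_aug_period)

lemma run_Suc: "run (Suc t) = run t \<bind> (\<lambda>s. map_pmf (\<lambda>y. fst (fst y)) (aug_period (sel (bt t s)) s))"
  by (simp add: period_aug bt_def)

lemma supp_run: "s \<in> set_pmf (run t) \<Longrightarrow> (\<forall>l. 0 \<le> fst s l) \<and> 0 \<le> snd s"
proof (induction t arbitrary: s)
  case 0 then show ?case using C0 by simp
next
  case (Suc t)
  from Suc.prems obtain s0 z where s0: "s0 \<in> set_pmf (run t)" and z: "z \<in> set_pmf (aug_period (sel (bt t s0)) s0)"
    and sz: "s = fst (fst z)"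
    by (simp only: run_Suc set_bind_pmf set_map_pmf) blast
  have h: "(\<forall>l. 0 \<le> fst s0 l) \<and> 0 \<le> snd s0" by (rule Suc.IH[OF s0])
  have z': "z \<in> set_pmf (aug_period (sel (bt t s0)) (fst s0, snd s0))" using z by simp
  have I: "sinv (fst s0) (snd s0) z" by (rule sinv_period[OF _ z']) (use h in auto)
  show ?case using I sinv_snd_nonneg[OF I] h unfolding sz by (auto simp: sinv_def Let_def)
qed

lemma bt_nonneg: "s \<in> set_pmf (run t) \<Longrightarrow> 0 \<le> bt t s l"
  using supp_run[of s t] by (auto simp: bt_def)

lemma feas_t:
  assumes "s \<in> set_pmf (run t)"
  shows "\<And>i. 0 \<le> sel (bt t s) i" "\<And>i. sel (bt t s) i \<le> lam i"
    "\<And>l. (\<Sum>j\<in>UNIV. A l j * sel (bt t s) j) \<le> fst s l / real (T - t)"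
  using sel_opt[of "bt t s"] bt_nonneg[OF assms]
  by (auto simp: lp_optimal_def lp_feasible_def bt_def)

lemma phi_nonneg: "s \<in> set_pmf (run t) \<Longrightarrow> 0 \<le> phi t s"
  unfolding phi_def by (intro sum_nonneg mult_nonneg_nonneg r_nn feas_t(1)) auto

lemma b0_nonneg: "0 \<le> b0 l" using C0 by (simp add: b0_def)

lemma phi0_nonneg: "0 \<le> phi0"
  using sel_opt[of b0] b0_nonneg r_nn unfolding phi0_def
  by (auto simp: lp_optimal_def lp_feasible_def intro!: sum_nonneg mult_nonneg_nonneg)

definition S where "S t = (\<integral>\<^sup>+s. ennreal (snd s) \<partial>measure_pmf (run t))"


lemma R_step:
  assumes t: "t < T"
  shows "S t + (\<integral>\<^sup>+s. ennreal (phi t s) \<partial>measure_pmf (run t)) \<le> S (Suc t) + ennreal (Kr / sqrt (real (T - t)))"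
proof -
  have "S t + (\<integral>\<^sup>+s. ennreal (phi t s) \<partial>measure_pmf (run t)) = (\<integral>\<^sup>+s. ennreal (snd s + phi t s) \<partial>measure_pmf (run t))"
    unfolding S_def by (rule pmf_int_add[symmetric]) (auto dest: supp_run phi_nonneg)
  also have "\<dots> \<le> (\<integral>\<^sup>+s. (\<integral>\<^sup>+z. ennreal (snd (fst (fst z))) \<partial>measure_pmf (aug_period (sel (bt t s)) s)) + ennreal (Kr / sqrt (real (T - t))) \<partial>measure_pmf (run t))"
  proof (intro nn_integral_mono_AE, unfold AE_measure_pmf_iff, intro ballI)
    fix s assume s: "s \<in> set_pmf (run t)"
    have h: "(\<forall>l. 0 \<le> fst s l) \<and> 0 \<le> snd s" by (rule supp_run[OF s])
    have "ennreal (snd s + (\<Sum>j\<in>UNIV. r j * sel (bt t s) j)) \<le>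
      (\<integral>\<^sup>+z. ennreal (snd (fst (fst z))) \<partial>measure_pmf (aug_period (sel (bt t s)) (fst s, snd s))) + ennreal ((\<Sum>j\<in>UNIV. r j) * real CARD('m) * Bc / sqrt (real (T - t)))"
      by (rule revenue_lower) (use h t feas_t[OF s] in auto)
    thus "ennreal (snd s + phi t s) \<le> (\<integral>\<^sup>+z. ennreal (snd (fst (fst z))) \<partial>measure_pmf (aug_period (sel (bt t s)) s)) + ennreal (Kr / sqrt (real (T - t)))"
      by (simp add: phi_def Kr_def)
  qed
  also have "\<dots> = S (Suc t) + ennreal (Kr / sqrt (real (T - t)))"
    unfolding S_def run_Suc by (subst nn_integral_add) auto
  finally show ?thesis .
qed

lemma U_step:
  assumes t: "t < T"
  shows "S (Suc t) \<le> S t + ennreal (\<Sum>j\<in>UNIV. r j * lam j)"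
proof -
  have "S (Suc t) = (\<integral>\<^sup>+s. (\<integral>\<^sup>+z. ennreal (snd (fst (fst z))) \<partial>measure_pmf (aug_period (sel (bt t s)) s)) \<partial>measure_pmf (run t))"
    unfolding S_def run_Suc by simp
  also have "\<dots> \<le> (\<integral>\<^sup>+s. ennreal (snd s + (\<Sum>j\<in>UNIV. r j * lam j)) \<partial>measure_pmf (run t))"
  proof (intro nn_integral_mono_AE, unfold AE_measure_pmf_iff, intro ballI)
    fix s assume s: "s \<in> set_pmf (run t)"
    have h: "(\<forall>l. 0 \<le> fst s l) \<and> 0 \<le> snd s" by (rule supp_run[OF s])
    have "(\<integral>\<^sup>+z. ennreal (snd (fst (fst z))) \<partial>measure_pmf (aug_period (sel (bt t s)) (fst s, snd s))) \<le> ennreal (snd s + (\<Sum>j\<in>UNIV. r j * sel (bt t s) j))"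
      by (rule revenue_upper) (use h feas_t[OF s] in auto)
    also have "\<dots> \<le> ennreal (snd s + (\<Sum>j\<in>UNIV. r j * lam j))"
      using feas_t(2)[OF s] r_nn by (intro ennreal_leI add_left_mono sum_mono mult_left_mono) auto
    finally show "(\<integral>\<^sup>+z. ennreal (snd (fst (fst z))) \<partial>measure_pmf (aug_period (sel (bt t s)) s)) \<le> ennreal (snd s + (\<Sum>j\<in>UNIV. r j * lam j))"
      by simp
  qed
  also have "\<dots> = S t + ennreal (\<Sum>j\<in>UNIV. r j * lam j)"
    unfolding S_def
    by (subst pmf_int_add) (auto dest: supp_run intro!: sum_nonneg mult_nonneg_nonneg r_nn less_imp_le[OF lam_pos])
  finally show ?thesis .
qed

lemma Q_run:
  assumes "t < T"
  shows "(\<integral>\<^sup>+s. ennreal (Qf t s) \<partial>measure_pmf (run t)) \<le> ennreal (KQm * (2 / real (T - t) - 2 / real T))"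
  using assms
proof (induction t)
  case 0
  have "Qf 0 (C, 0) = 0" unfolding Qf_def b0_def by simp
  thus ?case by (simp add: Qf_def)
next
  case (Suc t)
  have tT: "t < T" using Suc.prems by simp
  define \<tau> where "\<tau> = real (T - t)"
  have t2: "2 \<le> \<tau>" using Suc.prems by (simp add: \<tau>_def)
  have tS: "real (T - Suc t) = \<tau> - 1" using Suc.prems by (simp add: \<tau>_def)
  have "(\<integral>\<^sup>+s. ennreal (Qf (Suc t) s) \<partial>measure_pmf (run (Suc t)))
     = (\<integral>\<^sup>+s. (\<integral>\<^sup>+z. ennreal (Qf (Suc t) (fst (fst z))) \<partial>measure_pmf (aug_period (sel (bt t s)) s)) \<partial>measure_pmf (run t))"
    unfolding run_Suc by simp
  also have "\<dots> \<le> (\<integral>\<^sup>+s. ennreal (Qf t s + KQm / (\<tau> - 1)^2) \<partial>measure_pmf (run t))"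
  proof (intro nn_integral_mono_AE, unfold AE_measure_pmf_iff, intro ballI)
    fix s assume s: "s \<in> set_pmf (run t)"
    have h: "(\<forall>l. 0 \<le> fst s l) \<and> 0 \<le> snd s" by (rule supp_run[OF s])
    have "(\<integral>\<^sup>+z. ennreal (Qf (Suc t) (fst (fst z))) \<partial>measure_pmf (aug_period (sel (bt t s)) (fst s, snd s)))
      = (\<Sum>l\<in>UNIV. \<integral>\<^sup>+z. ennreal ((max 0 (b0 l - fst (fst (fst z)) l / (\<tau> - 1)))^2) \<partial>measure_pmf (aug_period (sel (bt t s)) (fst s, snd s)))"
      unfolding Qf_def tS by (rule pmf_int_sum) auto
    also have "\<dots> \<le> (\<Sum>l\<in>UNIV. ennreal ((max 0 (b0 l - fst s l / \<tau>))^2 + KQ / (\<tau> - 1)^2))"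
      by (intro sum_mono Q_step) (use h t2 feas_t[OF s] in \<open>auto simp: \<tau>_def\<close>)
    also have "\<dots> = ennreal (\<Sum>l\<in>UNIV. (max 0 (b0 l - fst s l / \<tau>))^2 + KQ / (\<tau> - 1)^2)"
      using KQ_nonneg by (intro sum_ennreal) auto
    also have "(\<Sum>l\<in>UNIV. (max 0 (b0 l - fst s l / \<tau>))^2 + KQ / (\<tau> - 1)^2) = Qf t s + KQm / (\<tau> - 1)^2"
      by (simp add: Qf_def \<tau>_def sum.distrib KQm_def)
    finally show "(\<integral>\<^sup>+z. ennreal (Qf (Suc t) (fst (fst z))) \<partial>measure_pmf (aug_period (sel (bt t s)) s)) \<le> ennreal (Qf t s + KQm / (\<tau> - 1)^2)"
      by simp
  qed
  also have "\<dots> = (\<integral>\<^sup>+s. ennreal (Qf t s) \<partial>measure_pmf (run t)) + ennreal (KQm / (\<tau> - 1)^2)"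
    using KQm_nonneg by (subst pmf_int_add) (auto simp: Qf_def intro!: sum_nonneg)
  also have "\<dots> \<le> ennreal (KQm * (2 / \<tau> - 2 / real T)) + ennreal (KQm / (\<tau> - 1)^2)"
    using Suc.IH[OF tT] by (simp add: \<tau>_def add_right_mono)
  also have "\<dots> = ennreal (KQm * (2 / \<tau> - 2 / real T) + KQm / (\<tau> - 1)^2)"
  proof -
    have "\<tau> \<le> real T" by (simp add: \<tau>_def)
    hence "2 / real T \<le> 2 / \<tau>" using t2 by (intro divide_left_mono) auto
    hence "0 \<le> KQm * (2 / \<tau> - 2 / real T)" using KQm_nonneg by simp
    thus ?thesis using KQm_nonneg by (simp add: ennreal_plus)
  qed
  also have "\<dots> \<le> ennreal (KQm * (2 / real (T - Suc t) - 2 / real T))"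
  proof (rule ennreal_leI)
    have "2 / \<tau> + 1 / (\<tau> - 1)^2 \<le> 2 / (\<tau> - 1)"
    proof -
      have p: "0 < \<tau> - 1" "0 < \<tau>" using t2 by auto
      have "2 / (\<tau> - 1) - 2 / \<tau> = 2 / (\<tau> * (\<tau> - 1))" using p by (simp add: field_simps)
      moreover have "1 / (\<tau> - 1)^2 \<le> 2 / (\<tau> * (\<tau> - 1))"
      proof -
        have "0 \<le> (\<tau> - 1) * (\<tau> - 2)" using t2 by simp
        hence h: "\<tau> * (\<tau> - 1) \<le> 2 * (\<tau> - 1)^2" by (simp add: power2_eq_square algebra_simps)
        have "1 / (\<tau> - 1)^2 = 2 / (2 * (\<tau> - 1)^2)" by simp
        also have "\<dots> \<le> 2 / (\<tau> * (\<tau> - 1))" using h p by (intro divide_left_mono) auto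
        finally show ?thesis .
      qed
      ultimately show ?thesis by linarith
    qed
    hence "KQm * (2 / \<tau> + 1 / (\<tau> - 1)^2) \<le> KQm * (2 / (\<tau> - 1))" using KQm_nonneg by (rule mult_left_mono)
    thus "KQm * (2 / \<tau> - 2 / real T) + KQm / (\<tau> - 1)^2 \<le> KQm * (2 / real (T - Suc t) - 2 / real T)"
      by (simp add: tS algebra_simps)
  qed
  finally show ?case .
qed

lemma phi_pointwise:
  assumes s: "s \<in> set_pmf (run t)" and t: "t < T"
  shows "phi0 \<le> phi t s + (Kc * sqrt (real (T - t)) / 2) * Qf t s + Kc * real CARD('m) / (2 * sqrt (real (T - t)))"
proof -
  define \<tau> where "\<tau> = real (T - t)"
  have t1: "1 \<le> \<tau>" using t by (simp add: \<tau>_def)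
  have st: "0 < sqrt \<tau>" using t1 by simp
  define D where "D l = max 0 (b0 l - bt t s l)" for l
  have lip: "phi0 \<le> phi t s + Kc * (\<Sum>l\<in>UNIV. D l)"
    unfolding phi0_def phi_def D_def
    by (rule lp_lipschitz[OF b0_nonneg bt_nonneg[OF s] sel_opt sel_opt]) (auto intro: b0_nonneg bt_nonneg[OF s])
  have Dl: "D l \<le> (sqrt \<tau> * D l ^ 2 + 1 / sqrt \<tau>) / 2" for l
  proof -
    have "D l \<le> (D l ^ 2 / (1 / sqrt \<tau>) + 1 / sqrt \<tau>) / 2" by (rule amgm) (use st in simp)
    thus ?thesis by (simp add: mult.commute)
  qed
  have "(\<Sum>l\<in>UNIV. D l) \<le> (\<Sum>l\<in>UNIV. (sqrt \<tau> * D l ^ 2 + 1 / sqrt \<tau>) / 2)" by (intro sum_mono Dl)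
  also have "\<dots> = (sqrt \<tau> * (\<Sum>l\<in>UNIV. D l ^ 2) + real CARD('m) / sqrt \<tau>) / 2"
    by (simp add: sum_divide_distrib[symmetric] sum.distrib sum_distrib_left)
  also have "(\<Sum>l\<in>UNIV. D l ^ 2) = Qf t s" by (simp add: Qf_def D_def bt_def \<tau>_def)
  finally have "Kc * (\<Sum>l\<in>UNIV. D l) \<le> Kc * ((sqrt \<tau> * Qf t s + real CARD('m) / sqrt \<tau>) / 2)"
    using Kc_nonneg by (rule mult_left_mono)
  also have "\<dots> = (Kc * sqrt \<tau> / 2) * Qf t s + Kc * real CARD('m) / (2 * sqrt \<tau>)"
    by (simp add: field_simps)
  finally show ?thesis using lip by (simp add: \<tau>_def)
qed

lemma phi_bound:
  assumes t: "t < T"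
  shows "ennreal phi0 \<le> (\<integral>\<^sup>+s. ennreal (phi t s) \<partial>measure_pmf (run t)) + ennreal (Kp / sqrt (real (T - t)))"
proof -
  define \<tau> where "\<tau> = real (T - t)"
  have t1: "1 \<le> \<tau>" using t by (simp add: \<tau>_def)
  have st: "0 < sqrt \<tau>" using t1 by simp
  define a where "a = Kc * sqrt \<tau> / 2"
  define b where "b = Kc * real CARD('m) / (2 * sqrt \<tau>)"
  have a0: "0 \<le> a" using Kc_nonneg st by (simp add: a_def)
  have b0': "0 \<le> b" using Kc_nonneg st by (simp add: b_def)
  have Q0: "\<And>s. 0 \<le> Qf t s" by (simp add: Qf_def sum_nonneg)
  have "ennreal phi0 = (\<integral>\<^sup>+s. ennreal phi0 \<partial>measure_pmf (run t))" by simp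
  also have "\<dots> \<le> (\<integral>\<^sup>+s. ennreal ((phi t s + a * Qf t s) + b) \<partial>measure_pmf (run t))"
    by (rule pmf_int_mono) (use phi_pointwise t in \<open>simp add: a_def b_def \<tau>_def\<close>)
  also have "\<dots> = (\<integral>\<^sup>+s. ennreal (phi t s) \<partial>measure_pmf (run t)) + ennreal a * (\<integral>\<^sup>+s. ennreal (Qf t s) \<partial>measure_pmf (run t)) + ennreal b"
  proof -
    have "(\<integral>\<^sup>+s. ennreal ((phi t s + a * Qf t s) + b) \<partial>measure_pmf (run t)) = (\<integral>\<^sup>+s. ennreal (phi t s + a * Qf t s) \<partial>measure_pmf (run t)) + (\<integral>\<^sup>+s. ennreal b \<partial>measure_pmf (run t))"
      by (rule pmf_int_add) (use phi_nonneg a0 Q0 b0' in \<open>auto intro!: add_nonneg_nonneg mult_nonneg_nonneg\<close>)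
    also have "(\<integral>\<^sup>+s. ennreal (phi t s + a * Qf t s) \<partial>measure_pmf (run t)) = (\<integral>\<^sup>+s. ennreal (phi t s) \<partial>measure_pmf (run t)) + (\<integral>\<^sup>+s. ennreal (a * Qf t s) \<partial>measure_pmf (run t))"
      by (rule pmf_int_add) (use phi_nonneg a0 Q0 in \<open>auto intro!: mult_nonneg_nonneg\<close>)
    also have "(\<integral>\<^sup>+s. ennreal (a * Qf t s) \<partial>measure_pmf (run t)) = ennreal a * (\<integral>\<^sup>+s. ennreal (Qf t s) \<partial>measure_pmf (run t))"
      by (rule pmf_int_cmult[OF a0])
    finally show ?thesis by simp
  qed
  also have "\<dots> \<le> (\<integral>\<^sup>+s. ennreal (phi t s) \<partial>measure_pmf (run t)) + ennreal a * ennreal (KQm * (2 / \<tau>)) + ennreal b"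
  proof -
    have "(\<integral>\<^sup>+s. ennreal (Qf t s) \<partial>measure_pmf (run t)) \<le> ennreal (KQm * (2 / \<tau> - 2 / real T))"
      using Q_run[OF t] by (simp add: \<tau>_def)
    also have "\<dots> \<le> ennreal (KQm * (2 / \<tau>))" using KQm_nonneg Tpos by (intro ennreal_leI mult_left_mono) auto
    finally show ?thesis by (intro add_mono mult_left_mono order_refl) auto
  qed
  also have "(\<integral>\<^sup>+s. ennreal (phi t s) \<partial>measure_pmf (run t)) + ennreal a * ennreal (KQm * (2 / \<tau>)) + ennreal b
      = (\<integral>\<^sup>+s. ennreal (phi t s) \<partial>measure_pmf (run t)) + ennreal (Kp / sqrt \<tau>)"
    unfolding add.assoc
  proof (rule arg_cong[where f="\<lambda>u. _ + u"])
    have "a * (KQm * (2 / \<tau>)) + b = Kp / sqrt \<tau>"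
    proof -
      have "\<tau> = sqrt \<tau> * sqrt \<tau>" using t1 by simp
      hence "a * (KQm * (2 / \<tau>)) = Kc * KQm / sqrt \<tau>" unfolding a_def using st by (simp add: field_simps)
      thus ?thesis unfolding Kp_def b_def using st by (simp add: field_simps)
    qed
    moreover have "0 \<le> KQm * (2 / \<tau>)" using KQm_nonneg t1 by simp
    moreover have "0 \<le> a * (KQm * (2 / \<tau>))" using a0 \<open>0 \<le> KQm * (2 / \<tau>)\<close> by (rule mult_nonneg_nonneg)
    ultimately show "ennreal a * ennreal (KQm * (2 / \<tau>)) + ennreal b = ennreal (Kp / sqrt \<tau>)"
      using a0 b0' \<open>0 \<le> KQm * (2 / \<tau>)\<close>
      by (simp only: ennreal_mult[symmetric] ennreal_plus[symmetric])
  qed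
  finally show ?thesis by (simp add: \<tau>_def add.assoc)
qed

lemma main_lower:
  assumes "t \<le> T"
  shows "ennreal (real t * phi0) \<le> S t + ennreal ((Kr + Kp) * (\<Sum>i<t. 1 / sqrt (real (T - i))))"
  using assms
proof (induction t)
  case 0 then show ?case by simp
next
  case (Suc t)
  have t: "t < T" using Suc.prems by simp
  define E where "E = (Kr + Kp) * (\<Sum>i<t. 1 / sqrt (real (T - i)))"
  define \<tau> where "\<tau> = real (T - t)"
  have E0: "0 \<le> E" unfolding E_def using Kr_nonneg Kp_nonneg by (intro mult_nonneg_nonneg sum_nonneg) auto
  have a0: "0 \<le> Kr / sqrt \<tau>" using Kr_nonneg by (intro divide_nonneg_nonneg) (auto simp: \<tau>_def)
  have a1: "0 \<le> Kp / sqrt \<tau>" using Kp_nonneg by (intro divide_nonneg_nonneg) (auto simp: \<tau>_def)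
  have IH: "ennreal (real t * phi0) \<le> S t + ennreal E" using Suc.IH t by (simp add: E_def)
  have "ennreal (real (Suc t) * phi0) = ennreal (real t * phi0) + ennreal phi0"
    using phi0_nonneg by (simp add: distrib_right ennreal_plus)
  also have "\<dots> \<le> (S t + ennreal E) + ((\<integral>\<^sup>+s. ennreal (phi t s) \<partial>measure_pmf (run t)) + ennreal (Kp / sqrt \<tau>))"
    using IH phi_bound[OF t] by (intro add_mono) (auto simp: \<tau>_def)
  also have "\<dots> = (S t + (\<integral>\<^sup>+s. ennreal (phi t s) \<partial>measure_pmf (run t))) + (ennreal E + ennreal (Kp / sqrt \<tau>))"
    by (simp add: ac_simps)
  also have "\<dots> \<le> (S (Suc t) + ennreal (Kr / sqrt \<tau>)) + (ennreal E + ennreal (Kp / sqrt \<tau>))"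
    using R_step[OF t] by (intro add_right_mono) (simp add: \<tau>_def)
  also have "\<dots> = S (Suc t) + ennreal (Kr / sqrt \<tau> + E + Kp / sqrt \<tau>)"
    using E0 a0 a1 by (simp add: ennreal_plus ac_simps del: ennreal_plus_if)
  also have "Kr / sqrt \<tau> + E + Kp / sqrt \<tau> = (Kr + Kp) * (\<Sum>i<Suc t. 1 / sqrt (real (T - i)))"
    unfolding E_def \<tau>_def by (simp add: algebra_simps add_divide_distrib)
  finally show ?case .
qed

lemma main_upper:
  assumes "t \<le> T"
  shows "S t \<le> ennreal (real t * (\<Sum>j\<in>UNIV. r j * lam j))"
  using assms
proof (induction t)
  case 0 then show ?case by (simp add: S_def)
next
  case (Suc t)
  have t: "t < T" using Suc.prems by simp
  have L0: "0 \<le> (\<Sum>j\<in>UNIV. r j * lam j)" using r_nn lam_pos by (intro sum_nonneg mult_nonneg_nonneg) (auto intro: less_imp_le)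
  have "S (Suc t) \<le> S t + ennreal (\<Sum>j\<in>UNIV. r j * lam j)" by (rule U_step[OF t])
  also have "\<dots> \<le> ennreal (real t * (\<Sum>j\<in>UNIV. r j * lam j)) + ennreal (\<Sum>j\<in>UNIV. r j * lam j)"
    using Suc.IH t by (intro add_right_mono) auto
  also have "\<dots> = ennreal (real (Suc t) * (\<Sum>j\<in>UNIV. r j * lam j))"
    using L0 by (simp add: ennreal_plus[symmetric] distrib_right del: ennreal_plus)
  finally show ?case .
qed

lemma final_bound: "v_DLP lam r A C T - v_FR lam r A sel C T \<le> 2 * (Kr + Kp) * sqrt (real T)"
proof -
  have vd: "v_DLP lam r A C T = real T * phi0"
    unfolding v_DLP_def phi0_def using lp_value_opt[OF sel_opt[OF b0_nonneg]] by (simp add: b0_def)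
  have fin: "S T \<le> ennreal (real T * (\<Sum>j\<in>UNIV. r j * lam j))" by (rule main_upper) simp
  hence Sfin: "S T \<noteq> \<top>" by (auto simp: top_unique)
  have vf: "v_FR lam r A sel C T = enn2real (S T)"
    unfolding v_FR_def S_def
    by (rule integral_eq_nn_integral) (auto simp: AE_measure_pmf_iff dest: supp_run)
  define E where "E = (Kr + Kp) * (\<Sum>i<T. 1 / sqrt (real (T - i)))"
  have E0: "0 \<le> E" unfolding E_def using Kr_nonneg Kp_nonneg by (intro mult_nonneg_nonneg sum_nonneg) auto
  have "ennreal (real T * phi0) \<le> S T + ennreal E" using main_lower[of T] by (simp add: E_def)
  also have "S T = ennreal (enn2real (S T))" using Sfin by (simp add: ennreal_enn2real_if)
  finally have "ennreal (real T * phi0) \<le> ennreal (enn2real (S T) + E)"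
    using E0 by (simp add: ennreal_plus)
  hence "real T * phi0 \<le> enn2real (S T) + E"
    using E0 by (subst (asm) ennreal_le_iff) (auto intro: add_nonneg_nonneg)
  moreover have "E \<le> (Kr + Kp) * (2 * sqrt (real T))"
  proof -
    have "(\<Sum>i<T. 1 / sqrt (real (T - i))) \<le> 2 * sqrt (real T) - 2 * sqrt (real (T - T))" by (rule sqrt_sum) simp
    hence "(\<Sum>i<T. 1 / sqrt (real (T - i))) \<le> 2 * sqrt (real T)" by simp
    thus ?thesis unfolding E_def using Kr_nonneg Kp_nonneg by (intro mult_left_mono) auto
  qed
  ultimately have "real T * phi0 - enn2real (S T) \<le> (Kr + Kp) * (2 * sqrt (real T))" by linarith
  thus ?thesis using vd vf by (simp add: mult_ac)
qed

end


theorem proposition3: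
  fixes lam r :: "'n::finite \<Rightarrow> real" and A :: "'m::finite \<Rightarrow> 'n \<Rightarrow> real"
  assumes "\<forall>j. 0 < lam j" and "\<forall>j. 0 \<le> r j" and "\<forall>l j. 0 \<le> A l j"
  shows "\<exists>M::real. \<exists>T1::nat. \<forall>sel C (T::nat).
           (\<forall>b. (\<forall>l. 0 \<le> b l) \<longrightarrow> lp_optimal lam r A b (sel b)) \<longrightarrow>
           (\<forall>l. 0 \<le> C l) \<longrightarrow> 0 < T \<longrightarrow> T1 \<le> T \<longrightarrow>
           v_DLP lam r A C T - v_FR lam r A sel C T \<le> M * sqrt (real T)"
proof -
  interpret nrm lam r A using assms by unfold_locales auto
  show ?thesis
  proof (rule exI[of _ "2 * (Kr + Kp)"], rule exI[of _ 1], intro allI impI)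
    fix sel :: "('m \<Rightarrow> real) \<Rightarrow> ('n \<Rightarrow> real)" and C :: "'m \<Rightarrow> real" and T :: nat
    assume sel: "\<forall>b. (\<forall>l. 0 \<le> b l) \<longrightarrow> lp_optimal lam r A b (sel b)" and C: "\<forall>l. 0 \<le> C l"
      and T: "0 < T" and "1 \<le> T"
    interpret frctx lam r A sel C T using sel C T by unfold_locales auto
    show "v_DLP lam r A C T - v_FR lam r A sel C T \<le> 2 * (Kr + Kp) * sqrt (real T)"
      by (rule final_bound)
  qed
qed

end
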